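(* Assume the standing setup. For distinct $i,j\in[k]$, $x_{ij}=0$ if and only if $y_{ij}=0$. Equivalently, $s_j\cdot\alpha_i\neq\alpha_i$ if and only if $s_j\cdot\beta_i\neq\beta_i$, so the associated digraphs of $V_1$ and $V_2$ (vertex set $[k]$, arrow $i\to j$ iff $s_j$ does not fix the chosen reflection vector of $s_i$) coincide.
   Context: Standing setup: $\mathbb{F}$ is a field of characteristic $0$; $W$ is a group with finite generating set $S=\{s_1,\dots,s_k\}$. A linear map on a finite-dimensional space is a (generalized) reflection if it is diagonalizable and $s-\operatorname{Id}$ has rank $1$; a reflection vector is a nonzero vector in $\operatorname{Im}(s-\operatorname{Id})$. $(V_1,\rho_1)$, $(V_2,\rho_2)$ are irreducible reflection representations of $(W,S)$ (each $s_i$ acts by a reflection), both of dimension $n$. For each $i\in[k]$, $\alpha_i\in V_1$ is a chosen reflection vector of $s_i$ with $s_i\alpha_i=\lambda_i\alpha_i$ and $\beta_i\in V_2$ a chosen reflection vector of $s_i$ with $s_i\beta_i=\mu_i\beta_i$. $d$ is an integer with $1\le d\le n-1$, and $\psi:\bigwedge^dV_1\to\bigwedge^dV_2$ is an isomorphism of $W$-modules ($W$ acting diagonally). For distinct $a,b\in[k]$, the scalars $x_{ab},y_{ab}\in\mathbb{F}$ are defined by $s_b\cdot\alpha_a=\alpha_a+x_{ab}\alpha_b$ and $s_b\cdot\beta_a=\beta_a+y_{ab}\beta_b$. *)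

theory Defs
  imports "Jordan_Normal_Form.DL_Rank" "Jordan_Normal_Form.DL_Submatrix"
    "HOL-Algebra.Generated_Groups"
begin

definition diagonalizable_mat :: "'a::field mat \<Rightarrow> bool" where
  "diagonalizable_mat A \<longleftrightarrow> (\<exists>D. similar_mat A D \<and> diagonal_mat D)"

definition is_reflection :: "nat \<Rightarrow> 'a::field mat \<Rightarrow> bool" where
  "is_reflection n A \<longleftrightarrow> A \<in> carrier_mat n n \<and> diagonalizable_mat A
     \<and> vec_space.rank n (A - 1\<^sub>m n) = 1"

definition reflection_vector :: "nat \<Rightarrow> 'a::field mat \<Rightarrow> 'a vec \<Rightarrow> bool" where
  "reflection_vector n A v \<longleftrightarrow> v \<noteq> 0\<^sub>v n \<and>
     (\<exists>u \<in> carrier_vec n. v = (A - 1\<^sub>m n) *\<^sub>v u)"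

definition is_rep :: "('g, 'b) monoid_scheme \<Rightarrow> nat \<Rightarrow> ('g \<Rightarrow> 'a::field mat) \<Rightarrow> bool" where
  "is_rep W n \<rho> \<longleftrightarrow> (\<forall>g \<in> carrier W. \<rho> g \<in> carrier_mat n n)
     \<and> (\<forall>g \<in> carrier W. \<forall>h \<in> carrier W. \<rho> (g \<otimes>\<^bsub>W\<^esub> h) = \<rho> g * \<rho> h)
     \<and> \<rho> \<one>\<^bsub>W\<^esub> = 1\<^sub>m n"

definition invariant_subspace ::
  "('g, 'b) monoid_scheme \<Rightarrow> nat \<Rightarrow> ('g \<Rightarrow> 'a::field mat) \<Rightarrow> 'a vec set \<Rightarrow> bool" where
  "invariant_subspace W n \<rho> U \<longleftrightarrow> U \<subseteq> carrier_vec n \<and> 0\<^sub>v n \<in> U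
     \<and> (\<forall>u \<in> U. \<forall>v \<in> U. u + v \<in> U) \<and> (\<forall>c. \<forall>u \<in> U. c \<cdot>\<^sub>v u \<in> U)
     \<and> (\<forall>g \<in> carrier W. \<forall>u \<in> U. \<rho> g *\<^sub>v u \<in> U)"

definition irreducible_rep :: "('g, 'b) monoid_scheme \<Rightarrow> nat \<Rightarrow> ('g \<Rightarrow> 'a::field mat) \<Rightarrow> bool" where
  "irreducible_rep W n \<rho> \<longleftrightarrow> is_rep W n \<rho> \<and> n > 0 \<and>
     (\<forall>U. invariant_subspace W n \<rho> U \<longrightarrow> U = {0\<^sub>v n} \<or> U = carrier_vec n)"

definition reflection_rep ::
  "('g, 'b) monoid_scheme \<Rightarrow> nat \<Rightarrow> (nat \<Rightarrow> 'g) \<Rightarrow> nat \<Rightarrow> ('g \<Rightarrow> 'a::field mat) \<Rightarrow> bool" where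
  "reflection_rep W k s n \<rho> \<longleftrightarrow> is_rep W n \<rho> \<and> (\<forall>i<k. is_reflection n (\<rho> (s i)))"

text \<open>The d-th exterior power of F^n, in coordinates w.r.t. the basis
  e_I = e_{i_1} \<and> ... \<and> e_{i_d} (i_1 < ... < i_d), I a d-subset of {0..<n}:
  elements are coefficient functions supported on d-subsets.  A matrix A acts
  by its d-th compound matrix: the coefficient of e_I in A e_J is det A[I,J].\<close>

definition dsubsets :: "nat \<Rightarrow> nat \<Rightarrow> nat set set" where
  "dsubsets n d = {I. I \<subseteq> {..<n} \<and> card I = d}"

definition ext_space :: "nat \<Rightarrow> nat \<Rightarrow> (nat set \<Rightarrow> 'a::field) set" where
  "ext_space n d = {f. \<forall>I. I \<notin> dsubsets n d \<longrightarrow> f I = 0}"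

definition ext_act :: "nat \<Rightarrow> nat \<Rightarrow> 'a::field mat \<Rightarrow> (nat set \<Rightarrow> 'a) \<Rightarrow> (nat set \<Rightarrow> 'a)" where
  "ext_act n d A f = (\<lambda>I. if I \<in> dsubsets n d
      then (\<Sum>J \<in> dsubsets n d. det (submatrix A I J) * f J) else 0)"

definition ext_iso ::
  "('g, 'b) monoid_scheme \<Rightarrow> nat \<Rightarrow> nat \<Rightarrow> ('g \<Rightarrow> 'a::field mat) \<Rightarrow> ('g \<Rightarrow> 'a mat)
     \<Rightarrow> ((nat set \<Rightarrow> 'a) \<Rightarrow> (nat set \<Rightarrow> 'a)) \<Rightarrow> bool" where
  "ext_iso W n d \<rho>1 \<rho>2 \<psi> \<longleftrightarrow>
     bij_betw \<psi> (ext_space n d) (ext_space n d)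
     \<and> (\<forall>f \<in> ext_space n d. \<forall>h \<in> ext_space n d. \<psi> (\<lambda>I. f I + h I) = (\<lambda>I. \<psi> f I + \<psi> h I))
     \<and> (\<forall>c. \<forall>f \<in> ext_space n d. \<psi> (\<lambda>I. c * f I) = (\<lambda>I. c * \<psi> f I))
     \<and> (\<forall>g \<in> carrier W. \<forall>f \<in> ext_space n d.
          \<psi> (ext_act n d (\<rho>1 g) f) = ext_act n d (\<rho>2 g) (\<psi> f))"

end

theory Submission
  imports Defs "Jordan_Normal_Form.DL_Rank_Submatrix"
begin


lemma dsub_card: "J \<in> dsubsets n d \<Longrightarrow> m = n \<Longrightarrow> card {j. j < m \<and> j \<in> J} = d"
proof -
  assume J: "J \<in> dsubsets n d" "m = n"
  hence "{j. j < m \<and> j \<in> J} = J" unfolding dsubsets_def by auto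
  thus ?thesis using J unfolding dsubsets_def by simp
qed

lemma card_UNIV_less: "card {i. i < d \<and> i \<in> UNIV} = d" by simp

lemma sub_carrier:
  assumes A: "A \<in> carrier_mat m n" and I: "I \<in> dsubsets m d" and J: "J \<in> dsubsets n d"
  shows "submatrix A I J \<in> carrier_mat d d"
proof -
  have "dim_row (submatrix A I J) = d" unfolding dim_submatrix using A by (intro dsub_card[OF I]) auto
  moreover have "dim_col (submatrix A I J) = d" unfolding dim_submatrix using A by (intro dsub_card[OF J]) auto
  ultimately show ?thesis by auto
qed

lemma sub_index:
  assumes A: "A \<in> carrier_mat m n" and I: "I \<in> dsubsets m d" and J: "J \<in> dsubsets n d"
    and i: "i < d" and j: "j < d"
  shows "submatrix A I J $$ (i,j) = A $$ (pick I i, pick J j)"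
  using submatrix_index[of i A I j J] A dsub_card[OF I] dsub_card[OF J] i j by auto

lemma subU_carrier1:
  assumes A: "A \<in> carrier_mat d n" and J: "J \<in> dsubsets n d"
  shows "submatrix A UNIV J \<in> carrier_mat d d"
proof -
  have "dim_row (submatrix A UNIV J) = d" unfolding dim_submatrix using A by simp
  moreover have "dim_col (submatrix A UNIV J) = d" unfolding dim_submatrix using A by (intro dsub_card[OF J]) auto
  ultimately show ?thesis by auto
qed

lemma subU_carrier2:
  assumes A: "A \<in> carrier_mat n d" and J: "J \<in> dsubsets n d"
  shows "submatrix A J UNIV \<in> carrier_mat d d"
proof -
  have "dim_col (submatrix A J UNIV) = d" unfolding dim_submatrix using A by simp
  moreover have "dim_row (submatrix A J UNIV) = d" unfolding dim_submatrix using A by (intro dsub_card[OF J]) auto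
  ultimately show ?thesis by auto
qed

lemma subU_index1:
  assumes A: "A \<in> carrier_mat d n" and J: "J \<in> dsubsets n d" and i: "i < d" and j: "j < d"
  shows "submatrix A UNIV J $$ (i,j) = A $$ (i, pick J j)"
  using submatrix_index[of i A UNIV j J] A dsub_card[OF J] i j by (auto simp: pick_UNIV)

lemma subU_index2:
  assumes A: "A \<in> carrier_mat n d" and J: "J \<in> dsubsets n d" and i: "i < d" and j: "j < d"
  shows "submatrix A J UNIV $$ (i,j) = A $$ (pick J i, j)"
  using submatrix_index[of i A J j UNIV] A dsub_card[OF J] i j by (auto simp: pick_UNIV)

lemma dsub_pick: "J \<in> dsubsets n d \<Longrightarrow> i < d \<Longrightarrow> pick J i \<in> J"
  using pick_in_set unfolding dsubsets_def by auto

lemma dsub_pick_less: "J \<in> dsubsets n d \<Longrightarrow> i < d \<Longrightarrow> pick J i < n"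
  using dsub_pick unfolding dsubsets_def by blast


lemma pick_image: assumes "finite J" shows "pick J ` {0..<card J} = J"
proof
  show "pick J ` {0..<card J} \<subseteq> J"
  proof
    fix x assume "x \<in> pick J ` {0..<card J}"
    then obtain i where "i < card J" "x = pick J i" by auto
    thus "x \<in> J" using pick_in_set[of i J] by simp
  qed
  show "J \<subseteq> pick J ` {0..<card J}"
  proof
    fix j assume j: "j \<in> J"
    have "{a\<in>J. a < j} \<subset> J" using j by auto
    hence "card {a\<in>J. a < j} < card J" using assms psubset_card_mono by blast
    hence c: "card {a\<in>J. a < j} \<in> {0..<card J}" by simp
    show "j \<in> pick J ` {0..<card J}" by (rule rev_image_eqI[where f="pick J", OF c pick_card_in_set[OF j, symmetric]])
  qed
qed

lemma pick_inj: "inj_on (pick J) {0..<card J}"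
proof (rule inj_onI)
  fix a b assume a: "a \<in> {0..<card J}" and b: "b \<in> {0..<card J}" and e: "pick J a = pick J b"
  show "a = b"
  proof (rule ccontr)
    assume "a \<noteq> b"
    then consider "a < b" | "b < a" by linarith
    thus False
    proof cases
      case 1
      have "b < card J" using b by simp
      hence "pick J a < pick J b" using pick_mono[of b J a] 1 by blast
      thus False using e by simp
    next
      case 2
      have "a < card J" using a by simp
      hence "pick J b < pick J a" using pick_mono[of a J b] 2 by blast
      thus False using e by simp
    qed
  qed
qed

definition "cbPhi d = (\<lambda>(J,p). (\<lambda>i::nat. if i < d then pick J (p i) else i))"
definition "cbPsi d f = (f ` {0..<d}, \<lambda>i::nat. if i < d then card {a \<in> f ` {0..<d}. a < f i} else i)"
definition "cbFi n d = {f. (\<forall>i\<in>{0..<d}. f i \<in> {0..<n}) \<and> (\<forall>i. i \<notin> {0..<d} \<longrightarrow> f i = i)} \<inter> {f. inj_on f {0..<d}}"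

lemma cb_sigma:
  assumes Jp: "(J,p) \<in> Sigma (dsubsets n d) (\<lambda>_. {p. p permutes {0..<d}})"
  shows "cbPsi d (cbPhi d (J,p)) = (J,p)" "cbPhi d (J,p) \<in> cbFi n d"
proof -
    have J: "J \<subseteq> {..<n}" "card J = d" and p: "p permutes {0..<d}"
      using Jp unfolding dsubsets_def by auto
    have finJ: "finite J" using J finite_subset by blast
    have pd: "\<And>i. i < d \<Longrightarrow> p i < d" using permutes_in_image[OF p] by simp
    have img: "(\<lambda>i. if i < d then pick J (p i) else i) ` {0..<d} = J"
    proof -
      have "(\<lambda>i. if i < d then pick J (p i) else i) ` {0..<d} = pick J ` (p ` {0..<d})" by auto
      also have "p ` {0..<d} = {0..<d}" using p permutes_image by blast
      finally show ?thesis using pick_image[OF finJ] J by simp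
    qed
    have cp: "\<And>i. i<d \<Longrightarrow> card {a\<in>J. a < pick J (p i)} = p i"
    proof -
      fix i assume "i < d" hence "p i < card J" using pd J by auto
      thus "card {a\<in>J. a < pick J (p i)} = p i" by (intro card_pick) simp
    qed
    have pe: "(\<lambda>i. if i < d then card {a \<in> J. a < pick J (p i)} else i) = p"
    proof
      fix i show "(if i < d then card {a \<in> J. a < pick J (p i)} else i) = p i"
        using cp p permutes_not_in[OF p, of i] by auto
    qed
    have e: "cbPhi d (J,p) = (\<lambda>i. if i < d then pick J (p i) else i)" unfolding cbPhi_def by simp
    have "cbPsi d (\<lambda>i. if i < d then pick J (p i) else i) = (J, \<lambda>i. if i < d then card {a \<in> J. a < pick J (p i)} else i)"
      unfolding cbPsi_def img by (auto intro!: ext)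
    thus "cbPsi d (cbPhi d (J,p)) = (J,p)" unfolding e pe .
    have "inj_on (\<lambda>i. if i < d then pick J (p i) else i) {0..<d}"
    proof (rule inj_onI)
      fix a b assume a: "a \<in> {0..<d}" and b: "b \<in> {0..<d}"
        and e: "(if a < d then pick J (p a) else a) = (if b < d then pick J (p b) else b)"
      hence "pick J (p a) = pick J (p b)" by auto
      moreover have "p a \<in> {0..<card J}" "p b \<in> {0..<card J}" using pd a b J by auto
      ultimately have "p a = p b" using pick_inj[of J] inj_onD by metis
      thus "a = b" using permutes_inj[OF p] injD by metis
    qed
    moreover have "\<forall>i\<in>{0..<d}. pick J (p i) \<in> {0..<n}"
    proof
      fix i assume "i \<in> {0..<d}"
      hence "p i < card J" using pd J by auto
      hence "pick J (p i) \<in> J" by (intro pick_in_set) simp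
      thus "pick J (p i) \<in> {0..<n}" using J by auto
    qed
    ultimately show "cbPhi d (J,p) \<in> cbFi n d" unfolding e cbFi_def by auto
qed

lemma cb_fi:
  assumes f: "f \<in> cbFi n d"
  shows "cbPhi d (cbPsi d f) = f" "cbPsi d f \<in> Sigma (dsubsets n d) (\<lambda>_. {p. p permutes {0..<d}})"
proof -
    let ?J = "f ` {0..<d}"
    have finJ: "finite ?J" by simp
    have cJ: "card ?J = d" using f card_image unfolding cbFi_def by fastforce
    have "(\<lambda>i. if i < d then pick ?J (card {a \<in> ?J. a < f i}) else i) = f"
    proof
      fix i show "(if i < d then pick ?J (card {a \<in> ?J. a < f i}) else i) = f i"
        using pick_card_in_set[of "f i" ?J] f unfolding cbFi_def by auto
    qed
    moreover have "cbPhi d (cbPsi d f) = (\<lambda>i. if i < d then pick ?J (card {a \<in> ?J. a < f i}) else i)"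
      unfolding cbPhi_def cbPsi_def by (auto intro!: ext)
    ultimately show "cbPhi d (cbPsi d f) = f" by simp
    have sub: "?J \<subseteq> {..<n}" using f unfolding cbFi_def by auto
    let ?q = "\<lambda>i. if i < d then card {a \<in> ?J. a < f i} else i"
    have qd: "\<And>i. i < d \<Longrightarrow> ?q i < d"
    proof -
      fix i assume i: "i < d"
      have "{a \<in> ?J. a < f i} \<subset> ?J" using i by auto
      thus "?q i < d" using psubset_card_mono[OF finJ] cJ i by auto
    qed
    have qinj: "inj_on ?q {0..<d}"
    proof (rule inj_onI)
      fix a b assume a: "a \<in> {0..<d}" and b: "b \<in> {0..<d}" and e: "?q a = ?q b"
      have "pick ?J (?q a) = f a" "pick ?J (?q b) = f b" using pick_card_in_set[of _ ?J] a b by auto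
      hence "f a = f b" using e by simp
      thus "a = b" using f a b unfolding inj_on_def cbFi_def by auto
    qed
    have "?q permutes {0..<d}"
    proof (rule bij_imp_permutes)
      have "?q ` {0..<d} \<subseteq> {0..<d}" using qd by auto
      hence "?q ` {0..<d} = {0..<d}" using endo_inj_surj[OF _ _ qinj] by blast
      thus "bij_betw ?q {0..<d} {0..<d}"
        using qinj by (simp add: bij_betw_def)
    next
      fix x assume "x \<notin> {0..<d}" thus "?q x = x" by simp
    qed
    moreover have "?J \<in> dsubsets n d" unfolding dsubsets_def using sub cJ by simp
    ultimately show "cbPsi d f \<in> Sigma (dsubsets n d) (\<lambda>_. {p. p permutes {0..<d}})"
      unfolding cbPsi_def by (intro SigmaI CollectI)
qed

lemma cb_reindex:
  fixes h :: "(nat \<Rightarrow> nat) \<Rightarrow> 'a::comm_ring_1"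
  shows "(\<Sum>f\<in>cbFi n d. h f)
   = (\<Sum>Jp\<in>Sigma (dsubsets n d) (\<lambda>_. {p. p permutes {0..<d}}). h (cbPhi d Jp))"
proof -
  let ?S = "Sigma (dsubsets n d) (\<lambda>_. {p. p permutes {0..<d}})"
  have inj: "inj_on (cbPhi d) ?S"
  proof (rule inj_onI)
    fix x y assume x: "x \<in> ?S" and y: "y \<in> ?S" and e: "cbPhi d x = cbPhi d y"
    obtain a b where ab: "x = (a,b)" by fastforce
    obtain a' b' where ab': "y = (a',b')" by fastforce
    have "x = cbPsi d (cbPhi d x)" unfolding ab using cb_sigma(1)[of a b n d, OF x(1)[unfolded ab]] by (rule sym)
    also have "\<dots> = cbPsi d (cbPhi d y)" using e by (rule arg_cong)
    also have "\<dots> = y" unfolding ab' using cb_sigma(1)[of a' b' n d, OF y[unfolded ab']] .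
    finally show "x = y" .
  qed
  have img: "cbPhi d ` ?S = cbFi n d"
  proof
    show "cbPhi d ` ?S \<subseteq> cbFi n d"
    proof
      fix f assume "f \<in> cbPhi d ` ?S"
      then obtain x where x: "x \<in> ?S" "f = cbPhi d x" by blast
      obtain a b where ab: "x = (a,b)" by fastforce
      have "(a,b) \<in> ?S" using x(1) unfolding ab .
      hence "cbPhi d (a,b) \<in> cbFi n d" by (rule cb_sigma(2))
      thus "f \<in> cbFi n d" unfolding x(2) ab .
    qed
    show "cbFi n d \<subseteq> cbPhi d ` ?S"
    proof
      fix f assume f: "f \<in> cbFi n d"
      have "f = cbPhi d (cbPsi d f)" using cb_fi(1)[OF f] by (rule sym)
      thus "f \<in> cbPhi d ` ?S" by (rule image_eqI[OF _ cb_fi(2)[OF f]])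
    qed
  qed
  show ?thesis unfolding img[symmetric] by (rule sum.reindex[OF inj, unfolded comp_def])
qed

lemma cb_block:
  fixes X Y :: "'a::comm_ring_1 mat"
  assumes X: "X \<in> carrier_mat d n" and Y: "Y \<in> carrier_mat n d" and J: "J \<in> dsubsets n d"
  shows "(\<Sum>p\<in>{p. p permutes {0..<d}}. (\<Prod>i=0..<d. X$$(i,(if i < d then pick J (p i) else i))) * det (mat\<^sub>r d d (\<lambda>i. row Y (if i < d then pick J (p i) else i))))
    = det (submatrix X UNIV J) * det (submatrix Y J UNIV)"
proof -
  let ?P = "{p. p permutes {0..<d}}"
  note XJ = subU_carrier1[OF X J] and YJ = subU_carrier2[OF Y J]
  {
    fix p assume p: "p permutes {0..<d}"
    have pd: "\<And>i. i < d \<Longrightarrow> p i < d" using permutes_in_image[OF p] by simp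
    have pJ: "\<And>i. i < d \<Longrightarrow> pick J (p i) < n"
      using dsub_pick_less[OF J] pd by blast
    have "mat\<^sub>r d d (\<lambda>i. row Y (if i < d then pick J (p i) else i))
        = mat d d (\<lambda>(i,j). submatrix Y J UNIV $$ (p i, j))"
    proof (rule eq_matI)
      fix i j assume ij: "i < dim_row (mat d d (\<lambda>(i,j). submatrix Y J UNIV $$ (p i, j)))"
         "j < dim_col (mat d d (\<lambda>(i,j). submatrix Y J UNIV $$ (p i, j)))"
      hence ij: "i < d" "j < d" by auto
      have "mat\<^sub>r d d (\<lambda>i. row Y (if i < d then pick J (p i) else i)) $$ (i,j) = Y $$ (pick J (p i), j)"
        using ij Y pJ[OF ij(1)] by simp
      also have "\<dots> = mat d d (\<lambda>(i,j). submatrix Y J UNIV $$ (p i, j)) $$ (i,j)"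
        using ij subU_index2[OF Y J pd[OF ij(1)] ij(2)] by simp
      finally show "mat\<^sub>r d d (\<lambda>i. row Y (if i < d then pick J (p i) else i)) $$ (i,j) = mat d d (\<lambda>(i,j). submatrix Y J UNIV $$ (p i, j)) $$ (i,j)" .
    qed auto
    hence "det (mat\<^sub>r d d (\<lambda>i. row Y (if i < d then pick J (p i) else i))) = signof p * det (submatrix Y J UNIV)"
      using det_permute_rows[OF YJ p] by simp
    moreover have "(\<Prod>i=0..<d. X$$(i, if i < d then pick J (p i) else i))
        = (\<Prod>i=0..<d. submatrix X UNIV J $$ (i, p i))"
      by (rule prod.cong[OF refl]) (simp add: subU_index1[OF X J] pd)
    ultimately have "(\<Prod>i=0..<d. X$$(i,(if i < d then pick J (p i) else i))) * det (mat\<^sub>r d d (\<lambda>i. row Y (if i < d then pick J (p i) else i)))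
      = (signof p * (\<Prod>i=0..<d. submatrix X UNIV J $$ (i, p i))) * det (submatrix Y J UNIV)"
      by (simp add: ac_simps)
  }
  hence "(\<Sum>p\<in>?P. (\<Prod>i=0..<d. X$$(i,(if i < d then pick J (p i) else i))) * det (mat\<^sub>r d d (\<lambda>i. row Y (if i < d then pick J (p i) else i))))
    = (\<Sum>p\<in>?P. (signof p * (\<Prod>i=0..<d. submatrix X UNIV J $$ (i, p i))) * det (submatrix Y J UNIV))"
    by (intro sum.cong) auto
  also have "\<dots> = det (submatrix X UNIV J) * det (submatrix Y J UNIV)"
    unfolding det_def'[OF XJ] sum_distrib_right by simp
  finally show ?thesis .
qed

lemma cauchy_binet:
  fixes X Y :: "'a::comm_ring_1 mat"
  assumes X: "X \<in> carrier_mat d n" and Y: "Y \<in> carrier_mat n d"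
  shows "det (X * Y) = (\<Sum>J\<in>dsubsets n d. det (submatrix X UNIV J) * det (submatrix Y J UNIV))"
proof -
  let ?F = "{f. (\<forall>i\<in>{0..<d}. f i \<in> {0..<n}) \<and> (\<forall>i. i \<notin> {0..<d} \<longrightarrow> f i = i)}"
  let ?Fi = "?F \<inter> {f. inj_on f {0..<d}}"
  let ?h = "\<lambda>f. (\<Prod>i=0..<d. X$$(i,f i)) * det (mat\<^sub>r d d (\<lambda>i. row Y (f i)))"
  have XY: "X * Y = mat\<^sub>r d d (\<lambda>i. finsum_vec TYPE('a) d (\<lambda>k. X $$ (i,k) \<cdot>\<^sub>v row Y k) {0..<n})"
    by (rule mat_mul_finsum_alt[OF X Y])
  have "det (X*Y) = (\<Sum>f\<in>?F. det (mat\<^sub>r d d (\<lambda>i. X$$(i,f i) \<cdot>\<^sub>v row Y (f i))))"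
    unfolding XY by (rule det_linear_rows_sum) (use Y in auto)
  also have "\<dots> = (\<Sum>f\<in>?F. ?h f)"
    by (rule sum.cong[OF refl], rule det_rows_mul) (use Y in auto)
  also have "\<dots> = (\<Sum>f\<in>?Fi. ?h f)"
  proof (rule sum.mono_neutral_right)
    show "finite ?F" by (rule finite_bounded_functions) auto
    show "?Fi \<subseteq> ?F" by blast
    show "\<forall>f\<in>?F - ?Fi. ?h f = 0"
    proof
      fix f assume f: "f \<in> ?F - ?Fi"
      then obtain i j where ij: "i \<in> {0..<d}" "j \<in> {0..<d}" "i \<noteq> j" "f i = f j"
        unfolding inj_on_def by auto
      have "det (mat\<^sub>r d d (\<lambda>i. row Y (f i))) = 0"
      proof (rule det_identical_rows[of _ d i j])
        show "row (mat\<^sub>r d d (\<lambda>i. row Y (f i))) i = row (mat\<^sub>r d d (\<lambda>i. row Y (f i))) j"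
          using ij Y by simp
      qed (use ij in auto)
      thus "?h f = 0" by simp
    qed
  qed
  also have "\<dots> = (\<Sum>Jp\<in>Sigma (dsubsets n d) (\<lambda>_. {p. p permutes {0..<d}}). ?h (cbPhi d Jp))"
    unfolding cbFi_def[symmetric] by (rule cb_reindex)
  also have "\<dots> = (\<Sum>(J,p)\<in>Sigma (dsubsets n d) (\<lambda>_. {p. p permutes {0..<d}}). ?h (\<lambda>i. if i < d then pick J (p i) else i))"
    by (rule sum.cong[OF refl]) (auto simp: cbPhi_def)
  also have "\<dots> = (\<Sum>J\<in>dsubsets n d. \<Sum>p\<in>{p. p permutes {0..<d}}. ?h (\<lambda>i. if i < d then pick J (p i) else i))"
  proof (subst sum.Sigma)
    show "finite (dsubsets n d)" unfolding dsubsets_def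
      by (rule finite_subset[of _ "Pow {..<n}"]) auto
  qed (auto simp: finite_permutations)
  also have "\<dots> = (\<Sum>J\<in>dsubsets n d. det (submatrix X UNIV J) * det (submatrix Y J UNIV))"
    by (rule sum.cong[OF refl], rule cb_block[OF X Y])
  finally show ?thesis .
qed


lemma card_lt_UNIV: "card {i. i < (c::nat) \<and> i \<in> UNIV} = c" by simp

lemma submatrix_UNIV_UNIV: "submatrix A UNIV UNIV = A"
  by (rule eq_matI) (auto simp: submatrix_def pick_UNIV)

lemma submatrix_twice: "submatrix (submatrix A I UNIV) UNIV J = submatrix A I J"
proof (rule eq_matI)
  show "dim_row (submatrix (submatrix A I UNIV) UNIV J) = dim_row (submatrix A I J)"
    by (simp add: dim_submatrix)
  show "dim_col (submatrix (submatrix A I UNIV) UNIV J) = dim_col (submatrix A I J)"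
    by (simp add: dim_submatrix)
  fix i j assume i: "i < dim_row (submatrix A I J)" and j: "j < dim_col (submatrix A I J)"
  have i': "i < card {i. i < dim_row A \<and> i \<in> I}" and j': "j < card {j. j < dim_col A \<and> j \<in> J}"
    using i j by (simp_all add: dim_submatrix)
  have pj: "pick J j < dim_col A" using pick_le j' by (simp add: Collect_conj_eq Int_commute)
  have pj': "pick J j < card {j. j < dim_col A \<and> j \<in> UNIV}" using pj by simp
  have "submatrix (submatrix A I UNIV) UNIV J $$ (i,j) = submatrix A I UNIV $$ (pick UNIV i, pick J j)"
    by (rule submatrix_index) (use i' j' in \<open>simp_all add: dim_submatrix\<close>)
  also have "\<dots> = A $$ (pick I i, pick J j)"
    using submatrix_index[OF i' pj'] by (simp add: pick_UNIV)
  also have "\<dots> = submatrix A I J $$ (i,j)" using submatrix_index[OF i' j'] by simp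
  finally show "submatrix (submatrix A I UNIV) UNIV J $$ (i,j) = submatrix A I J $$ (i,j)" .
qed

lemma sub_mult:
  assumes A: "A \<in> carrier_mat m n" and B: "B \<in> carrier_mat n p"
  shows "submatrix (A * B) I K = submatrix A I UNIV * submatrix B UNIV K"
proof (rule eq_matI)
  show "dim_row (submatrix (A * B) I K) = dim_row (submatrix A I UNIV * submatrix B UNIV K)"
    using A B by (simp add: dim_submatrix)
  show "dim_col (submatrix (A * B) I K) = dim_col (submatrix A I UNIV * submatrix B UNIV K)"
    using A B by (simp add: dim_submatrix)
  fix i k assume i: "i < dim_row (submatrix A I UNIV * submatrix B UNIV K)"
    and k: "k < dim_col (submatrix A I UNIV * submatrix B UNIV K)"
  have i': "i < card {i. i < m \<and> i \<in> I}" and k': "k < card {j. j < p \<and> j \<in> K}"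
    using i k A B by (simp_all add: dim_submatrix)
  have pi: "pick I i < m" using pick_le i' by (simp add: Collect_conj_eq Int_commute)
  have pk: "pick K k < p" using pick_le k' by (simp add: Collect_conj_eq Int_commute)
  have "submatrix (A * B) I K $$ (i,k) = (A * B) $$ (pick I i, pick K k)"
    by (rule submatrix_index) (use i' k' A B in simp_all)
  also have "\<dots> = (\<Sum>j<n. A $$ (pick I i, j) * B $$ (j, pick K k))"
    using A B pi pk by (simp add: scalar_prod_def lessThan_atLeast0)
  also have "\<dots> = (submatrix A I UNIV * submatrix B UNIV K) $$ (i,k)"
  proof -
    have "(submatrix A I UNIV * submatrix B UNIV K) $$ (i,k) =
      row (submatrix A I UNIV) i \<bullet> col (submatrix B UNIV K) k" using i k by simp
    also have "\<dots> = (\<Sum>j<n. submatrix A I UNIV $$ (i,j) * submatrix B UNIV K $$ (j,k))"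
      using i k A B by (simp add: scalar_prod_def dim_submatrix lessThan_atLeast0)
    also have "\<dots> = (\<Sum>j<n. A $$ (pick I i, j) * B $$ (j, pick K k))"
    proof (rule sum.cong[OF refl])
      fix j assume j: "j \<in> {..<n}"
      have "submatrix A I UNIV $$ (i,j) = A $$ (pick I i, pick UNIV j)"
        by (rule submatrix_index) (use i' j A in simp_all)
      moreover have "submatrix B UNIV K $$ (j,k) = B $$ (pick UNIV j, pick K k)"
        by (rule submatrix_index) (use k' j B in simp_all)
      ultimately show "submatrix A I UNIV $$ (i,j) * submatrix B UNIV K $$ (j,k) = A $$ (pick I i, j) * B $$ (j, pick K k)"
        by (simp add: pick_UNIV)
    qed
    finally show ?thesis by simp
  qed
  finally show "submatrix (A * B) I K $$ (i,k) = (submatrix A I UNIV * submatrix B UNIV K) $$ (i,k)" .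
qed

lemma subIU_carrier: assumes A: "A \<in> carrier_mat n n" and I: "I \<in> dsubsets n d"
  shows "submatrix A I UNIV \<in> carrier_mat d n"
proof -
  have "dim_row (submatrix A I UNIV) = d" unfolding dim_submatrix using A by (intro dsub_card[OF I]) auto
  moreover have "dim_col (submatrix A I UNIV) = n" unfolding dim_submatrix using A by simp
  ultimately show ?thesis by auto
qed

lemma subUK_carrier: assumes A: "A \<in> carrier_mat n n" and K: "K \<in> dsubsets n d"
  shows "submatrix A UNIV K \<in> carrier_mat n d"
proof -
  have "dim_col (submatrix A UNIV K) = d" unfolding dim_submatrix using A by (intro dsub_card[OF K]) auto
  moreover have "dim_row (submatrix A UNIV K) = n" unfolding dim_submatrix using A by simp
  ultimately show ?thesis by auto
qed

lemma det_sub_mult: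
  fixes A B :: "'a::comm_ring_1 mat"
  assumes A: "A \<in> carrier_mat n n" and B: "B \<in> carrier_mat n n"
    and I: "I \<in> dsubsets n d" and K: "K \<in> dsubsets n d"
  shows "det (submatrix (A * B) I K) = (\<Sum>J\<in>dsubsets n d. det (submatrix A I J) * det (submatrix B J K))"
proof -
  have "det (submatrix (A * B) I K) = det (submatrix A I UNIV * submatrix B UNIV K)"
    by (simp add: sub_mult[OF A B])
  also have "\<dots> = (\<Sum>J\<in>dsubsets n d. det (submatrix (submatrix A I UNIV) UNIV J) * det (submatrix (submatrix B UNIV K) J UNIV))"
    by (rule cauchy_binet[OF subIU_carrier[OF A I] subUK_carrier[OF B K]])
  also have "\<dots> = (\<Sum>J\<in>dsubsets n d. det (submatrix A I J) * det (submatrix B J K))"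
    by (simp add: submatrix_twice submatrix_split[symmetric])
  finally show ?thesis .
qed

lemma finite_dsubsets: "finite (dsubsets n d)"
  unfolding dsubsets_def by (rule finite_subset[of _ "Pow {..<n}"]) auto

lemma ext_act_space: "ext_act n d A f \<in> ext_space n d"
  unfolding ext_act_def ext_space_def by auto

lemma ext_act_mult:
  fixes A B :: "'a::field mat"
  assumes A: "A \<in> carrier_mat n n" and B: "B \<in> carrier_mat n n"
  shows "ext_act n d (A * B) f = ext_act n d A (ext_act n d B f)"
proof
  fix I
  show "ext_act n d (A * B) f I = ext_act n d A (ext_act n d B f) I"
  proof (cases "I \<in> dsubsets n d")
    case False thus ?thesis unfolding ext_act_def by simp
  next
    case True
    have "ext_act n d A (ext_act n d B f) I = (\<Sum>J\<in>dsubsets n d. det (submatrix A I J) * (\<Sum>K\<in>dsubsets n d. det (submatrix B J K) * f K))"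
      unfolding ext_act_def using True by (auto intro!: sum.cong)
    also have "\<dots> = (\<Sum>J\<in>dsubsets n d. \<Sum>K\<in>dsubsets n d. det (submatrix A I J) * det (submatrix B J K) * f K)"
      by (simp add: sum_distrib_left mult.assoc)
    also have "\<dots> = (\<Sum>K\<in>dsubsets n d. \<Sum>J\<in>dsubsets n d. det (submatrix A I J) * det (submatrix B J K) * f K)"
      by (rule sum.swap)
    also have "\<dots> = (\<Sum>K\<in>dsubsets n d. det (submatrix (A * B) I K) * f K)"
      by (rule sum.cong[OF refl]) (simp add: det_sub_mult[OF A B True] sum_distrib_right)
    also have "\<dots> = ext_act n d (A * B) f I" unfolding ext_act_def using True by simp
    finally show ?thesis by simp
  qed
qed

lemma det_zero_row:
  fixes A :: "'a::comm_ring_1 mat"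
  assumes A: "A \<in> carrier_mat m m" and r: "r < m" and z: "\<And>j. j < m \<Longrightarrow> A $$ (r,j) = 0"
  shows "det A = 0"
proof -
  have "\<And>p. p permutes {0..<m} \<Longrightarrow> (\<Prod>i=0..<m. A $$ (i, p i)) = 0"
  proof -
    fix p assume p: "p permutes {0..<m}"
    have "p r < m" using permutes_in_image[OF p] r by simp
    hence "A $$ (r, p r) = 0" by (rule z)
    thus "(\<Prod>i=0..<m. A $$ (i, p i)) = 0" using r by (intro prod_zero) auto
  qed
  thus ?thesis unfolding det_def'[OF A] by simp
qed

lemma det_zero_col:
  fixes A :: "'a::comm_ring_1 mat"
  assumes A: "A \<in> carrier_mat m m" and c: "c < m" and z: "\<And>i. i < m \<Longrightarrow> A $$ (i,c) = 0"
  shows "det A = 0"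
proof -
  have "det (transpose_mat A) = 0"
    by (rule det_zero_row[of _ m c]) (use A c z in auto)
  thus ?thesis using det_transpose[OF A] by simp
qed

lemma det_sub_one:
  assumes I: "I \<in> dsubsets n d" and J: "J \<in> dsubsets n d"
  shows "det (submatrix (1\<^sub>m n :: 'a::comm_ring_1 mat) I J) = (if I = J then 1 else 0)"
proof (cases "I = J")
  case True
  have "submatrix (1\<^sub>m n :: 'a mat) I J = 1\<^sub>m d"
  proof (rule eq_matI)
    fix i j assume "i < dim_row (1\<^sub>m d :: 'a mat)" "j < dim_col (1\<^sub>m d :: 'a mat)"
    hence ij: "i < d" "j < d" by auto
    have "submatrix (1\<^sub>m n :: 'a mat) I J $$ (i,j) = (1\<^sub>m n :: 'a mat) $$ (pick I i, pick J j)"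
      by (rule sub_index[OF _ I J ij]) simp
    also have "\<dots> = (if i = j then 1 else 0)"
    proof -
      have "card I = d" using I unfolding dsubsets_def by simp
      hence "pick I i = pick I j \<longleftrightarrow> i = j" using pick_inj[of I] ij unfolding inj_on_def by auto
      thus ?thesis using True dsub_pick_less[OF I] ij by simp
    qed
    finally show "submatrix (1\<^sub>m n :: 'a mat) I J $$ (i,j) = (1\<^sub>m d :: 'a mat) $$ (i,j)" using ij by simp
  qed (use sub_carrier[OF one_carrier_mat I J] in auto)
  thus ?thesis using True by simp
next
  case False
  have cI: "card I = d" "card J = d" "finite J" "finite I" using I J unfolding dsubsets_def
    by (auto intro: finite_subset)
  have "\<not> I \<subseteq> J"
  proof
    assume "I \<subseteq> J" hence "I = J" using cI card_subset_eq by metis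
    thus False using False by simp
  qed
  then obtain i where i: "i \<in> I" "i \<notin> J" by auto
  let ?r = "card {a\<in>I. a < i}"
  have "{a\<in>I. a < i} \<subset> I" using i by auto
  hence r: "?r < d" using psubset_card_mono[OF cI(4)] cI(1) by simp
  have "det (submatrix (1\<^sub>m n :: 'a mat) I J) = 0"
  proof (rule det_zero_row[OF sub_carrier[OF one_carrier_mat I J] r])
    fix j assume j: "j < d"
    have "submatrix (1\<^sub>m n :: 'a mat) I J $$ (?r,j) = (1\<^sub>m n :: 'a mat) $$ (pick I ?r, pick J j)"
      by (rule sub_index[OF _ I J r j]) simp
    also have "pick I ?r = i" using pick_card_in_set[OF i(1)] .
    finally show "submatrix (1\<^sub>m n :: 'a mat) I J $$ (?r,j) = 0"
      using i dsub_pick[OF J j] dsub_pick_less[OF J j] dsub_pick_less[OF I r] pick_card_in_set[OF i(1)]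
      by (auto simp: one_mat_def)
  qed
  thus ?thesis using False by simp
qed

lemma ext_act_one:
  assumes f: "f \<in> ext_space n d"
  shows "ext_act n d (1\<^sub>m n :: 'a::field mat) f = f"
proof
  fix I
  show "ext_act n d (1\<^sub>m n) f I = f I"
  proof (cases "I \<in> dsubsets n d")
    case False thus ?thesis using f unfolding ext_act_def ext_space_def by simp
  next
    case True
    have "ext_act n d (1\<^sub>m n) f I = (\<Sum>J\<in>dsubsets n d. (if I = J then 1 else 0) * f J)"
      unfolding ext_act_def using True by (simp add: det_sub_one)
    also have "\<dots> = (\<Sum>J\<in>dsubsets n d. if J = I then f J else 0)" by (rule sum.cong) auto
    also have "\<dots> = f I" using True finite_dsubsets by simp
    finally show ?thesis .
  qed
qed

definition wdg :: "nat \<Rightarrow> nat \<Rightarrow> 'a::comm_ring_1 mat \<Rightarrow> nat set \<Rightarrow> 'a" where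
  "wdg n d V = (\<lambda>I. if I \<in> dsubsets n d then det (submatrix V I UNIV) else 0)"

lemma wdg_space: "wdg n d V \<in> ext_space n d" unfolding wdg_def ext_space_def by auto

lemma ext_act_wdg:
  fixes A V :: "'a::field mat"
  assumes A: "A \<in> carrier_mat n n" and V: "V \<in> carrier_mat n d"
  shows "ext_act n d A (wdg n d V) = wdg n d (A * V)"
proof
  fix I
  show "ext_act n d A (wdg n d V) I = wdg n d (A * V) I"
  proof (cases "I \<in> dsubsets n d")
    case False thus ?thesis unfolding ext_act_def wdg_def by simp
  next
    case True
    have "ext_act n d A (wdg n d V) I = (\<Sum>J\<in>dsubsets n d. det (submatrix A I J) * det (submatrix V J UNIV))"
      unfolding ext_act_def wdg_def using True by (auto intro!: sum.cong)
    also have "\<dots> = det (submatrix A I UNIV * V)"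
      by (subst cauchy_binet[OF subIU_carrier[OF A True] V]) (simp add: submatrix_twice)
    also have "\<dots> = det (submatrix (A * V) I UNIV)"
      by (simp add: sub_mult[OF A V] submatrix_UNIV_UNIV)
    finally show ?thesis unfolding wdg_def using True by simp
  qed
qed


lemma det_id_except_row:
  fixes M :: "'a::comm_ring_1 mat"
  assumes M: "M \<in> carrier_mat m m" and r: "r < m"
    and e: "\<And>i j. i < m \<Longrightarrow> j < m \<Longrightarrow> i \<noteq> r \<Longrightarrow> M $$ (i,j) = (if i = j then 1 else 0)"
  shows "det M = M $$ (r,r)"
proof -
  let ?P = "{p. p permutes {0..<m}}"
  let ?g = "\<lambda>p. signof p * (\<Prod>i=0..<m. M $$ (i, p i))"
  have z: "?g p = 0" if p: "p \<in> ?P - {id}" for p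
  proof -
    have pp: "p permutes {0..<m}" and pid: "p \<noteq> id" using p by auto
    have "\<exists>i<m. i \<noteq> r \<and> p i \<noteq> i"
    proof (rule ccontr)
      assume "\<not> ?thesis"
      hence fx: "\<And>i. i < m \<Longrightarrow> i \<noteq> r \<Longrightarrow> p i = i" by auto
      have "p r = r"
      proof (rule ccontr)
        assume ne: "p r \<noteq> r"
        have "p r < m" using permutes_in_image[OF pp] r by simp
        hence "p (p r) = p r" using fx ne by simp
        hence "p r = r" using permutes_inj[OF pp] by (metis injD)
        thus False using ne by simp
      qed
      hence "\<And>i. p i = i" using fx permutes_not_in[OF pp] by (metis atLeastLessThan_iff le0)
      hence "p = id" by auto
      thus False using pid by simp
    qed
    then obtain i where i: "i < m" "i \<noteq> r" "p i \<noteq> i" by auto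
    have "p i < m" using permutes_in_image[OF pp] i by simp
    hence "M $$ (i, p i) = 0" using e[OF i(1) _ i(2)] i(3) by simp
    hence "(\<Prod>i=0..<m. M $$ (i, p i)) = 0" using i by (intro prod_zero) auto
    thus ?thesis by simp
  qed
  have "det M = sum ?g ?P" by (rule det_def'[OF M])
  also have "\<dots> = sum ?g {id}"
    by (rule sum.mono_neutral_right) (use z permutes_id finite_permutations in auto)
  also have "\<dots> = (\<Prod>i=0..<m. M $$ (i, i))" by simp
  also have "\<dots> = M $$ (r,r)"
  proof -
    have "(\<Prod>i=0..<m. M $$ (i, i)) = M $$ (r,r) * (\<Prod>i\<in>{0..<m} - {r}. M $$ (i, i))"
      using r by (subst prod.remove[of _ r]) auto
    also have "(\<Prod>i\<in>{0..<m} - {r}. M $$ (i, i)) = 1"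
      by (rule prod.neutral) (use e in auto)
    finally show ?thesis by simp
  qed
  finally show ?thesis .
qed

lemma det_id_except_col:
  fixes M :: "'a::comm_ring_1 mat"
  assumes M: "M \<in> carrier_mat m m" and c: "c < m"
    and e: "\<And>i j. i < m \<Longrightarrow> j < m \<Longrightarrow> j \<noteq> c \<Longrightarrow> M $$ (i,j) = (if i = j then 1 else 0)"
  shows "det M = M $$ (c,c)"
proof -
  have "det (transpose_mat M) = transpose_mat M $$ (c,c)"
    by (rule det_id_except_row[of _ m c]) (use M c e in auto)
  thus ?thesis using det_transpose[OF M] M c by simp
qed

lemma ext_act_diff: "ext_act n d A (\<lambda>I. f I - g I) = (\<lambda>I. ext_act n d A f I - ext_act n d A g I)"
  unfolding ext_act_def by (auto simp: sum_subtractf right_diff_distrib intro!: ext)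

lemma ext_act_smult: "ext_act n d A (\<lambda>I. c * f I) = (\<lambda>I. c * ext_act n d A f I)"
  unfolding ext_act_def by (auto simp: sum_distrib_left ac_simps intro!: ext)

definition QP :: "nat \<Rightarrow> nat \<Rightarrow> 'a::field mat \<Rightarrow> 'a mat \<Rightarrow> bool" where
  "QP n d A B \<longleftrightarrow> (\<exists>w u. w \<in> ext_space n d \<and> u \<in> ext_space n d \<and> w \<noteq> (\<lambda>_. 0)
     \<and> w = (\<lambda>I. ext_act n d A u I - u I) \<and> ext_act n d B w = w)"

lemma ext_space_diff: "f \<in> ext_space n d \<Longrightarrow> g \<in> ext_space n d \<Longrightarrow> (\<lambda>I. f I - g I) \<in> ext_space n d"
  unfolding ext_space_def by auto

lemma ext_space_add: "f \<in> ext_space n d \<Longrightarrow> g \<in> ext_space n d \<Longrightarrow> (\<lambda>I. f I + g I) \<in> ext_space n d"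
  unfolding ext_space_def by auto

lemma ext_space_smult: "f \<in> ext_space n d \<Longrightarrow> (\<lambda>I. c * f I) \<in> ext_space n d"
  unfolding ext_space_def by auto

lemma QP_transport:
  fixes T :: "(nat set \<Rightarrow> 'a::field) \<Rightarrow> (nat set \<Rightarrow> 'a)"
  assumes cl0: "\<forall>f\<in>ext_space n d. T f \<in> ext_space n d"
    and add0: "\<forall>f\<in>ext_space n d. \<forall>g\<in>ext_space n d. T (\<lambda>I. f I + g I) = (\<lambda>I. T f I + T g I)"
    and sm0: "\<forall>c. \<forall>f\<in>ext_space n d. T (\<lambda>I. c * f I) = (\<lambda>I. c * T f I)"
    and inj: "inj_on T (ext_space n d)"
    and iA0: "\<forall>f\<in>ext_space n d. T (ext_act n d A f) = ext_act n d A' (T f)"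
    and iB0: "\<forall>f\<in>ext_space n d. T (ext_act n d B f) = ext_act n d B' (T f)"
    and q: "QP n d A B"
  shows "QP n d A' B'"
proof -
  have cl: "\<And>f. f \<in> ext_space n d \<Longrightarrow> T f \<in> ext_space n d" using cl0 by blast
  have add: "\<And>f g. f \<in> ext_space n d \<Longrightarrow> g \<in> ext_space n d \<Longrightarrow> T (\<lambda>I. f I + g I) = (\<lambda>I. T f I + T g I)"
    using add0 by blast
  have sm: "\<And>c f. f \<in> ext_space n d \<Longrightarrow> T (\<lambda>I. c * f I) = (\<lambda>I. c * T f I)" using sm0 by blast
  have iA: "\<And>f. f \<in> ext_space n d \<Longrightarrow> T (ext_act n d A f) = ext_act n d A' (T f)" using iA0 by blast
  have iB: "\<And>f. f \<in> ext_space n d \<Longrightarrow> T (ext_act n d B f) = ext_act n d B' (T f)" using iB0 by blast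
  obtain w u where w: "w \<in> ext_space n d" and u: "u \<in> ext_space n d" and w0: "w \<noteq> (\<lambda>_. 0)"
    and wd: "w = (\<lambda>I. ext_act n d A u I - u I)" and wB: "ext_act n d B w = w"
    using q unfolding QP_def by blast
  have z: "(\<lambda>_. 0::'a) \<in> ext_space n d" unfolding ext_space_def by simp
  have T0: "T (\<lambda>_. 0) = (\<lambda>_. 0)" using sm[OF z, of 0] by simp
  have Tw0: "T w \<noteq> (\<lambda>_. 0)"
  proof
    assume "T w = (\<lambda>_. 0)"
    hence "T w = T (\<lambda>_. 0)" using T0 by simp
    hence "w = (\<lambda>_. 0)" using inj w z unfolding inj_on_def by blast
    thus False using w0 by simp
  qed
  have neg: "(\<lambda>I. (-1) * u I) \<in> ext_space n d" by (rule ext_space_smult[OF u])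
  have Au: "ext_act n d A u \<in> ext_space n d" by (rule ext_act_space)
  have "w = (\<lambda>I. ext_act n d A u I + (-1) * u I)" unfolding wd by simp
  hence "T w = (\<lambda>I. T (ext_act n d A u) I + T (\<lambda>I. (-1) * u I) I)" using add[OF Au neg] by simp
  also have "\<dots> = (\<lambda>I. ext_act n d A' (T u) I - T u I)" using iA[OF u] sm[OF u, of "-1"] by simp
  finally have e1: "T w = (\<lambda>I. ext_act n d A' (T u) I - T u I)" .
  have e2: "ext_act n d B' (T w) = T w" using iB[OF w] wB by simp
  show ?thesis unfolding QP_def using cl[OF w] cl[OF u] Tw0 e1 e2 by blast
qed


lemma mat_vec_zero: assumes Q: "Q \<in> carrier_mat m n" shows "Q *\<^sub>v 0\<^sub>v n = 0\<^sub>v m"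
proof (rule eq_vecI)
  fix i assume "i < dim_vec (0\<^sub>v m :: 'a::semiring_0 vec)"
  hence i: "i < m" by simp
  have "row Q i \<in> carrier_vec n" using Q i by simp
  thus "(Q *\<^sub>v 0\<^sub>v n) $ i = 0\<^sub>v m $ i" using Q i by simp
qed (use Q in simp)

lemma det2:
  fixes A :: "'a::comm_ring_1 mat"
  assumes A: "A \<in> carrier_mat 2 2"
  shows "det A = A $$ (0,0) * A $$ (1,1) - A $$ (0,1) * A $$ (1,0)"
proof -
  have "det A = (\<Sum>i<2. A $$ (i,0) * cofactor A i 0)" by (rule laplace_expansion_column[OF A]) simp
  also have "\<dots> = A $$ (0,0) * cofactor A 0 0 + A $$ (1,0) * cofactor A 1 0"
    by (simp add: numeral_2_eq_2)
  also have "cofactor A 0 0 = A $$ (1,1)"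
  proof -
    have c: "mat_delete A 0 0 \<in> carrier_mat 1 1" using mat_delete_carrier[OF A] by simp
    show ?thesis unfolding cofactor_def det_single[OF c] using A by (simp add: mat_delete_def)
  qed
  also have "cofactor A 1 0 = - A $$ (0,1)"
  proof -
    have c: "mat_delete A 1 0 \<in> carrier_mat 1 1" using mat_delete_carrier[OF A] by simp
    show ?thesis unfolding cofactor_def det_single[OF c] using A by (simp add: mat_delete_def)
  qed
  finally show ?thesis by (simp add: algebra_simps)
qed

lemma pick2_0: "a < b \<Longrightarrow> pick {a,b} 0 = a"
  by (simp, rule Least_equality) auto

lemma pick2_1: assumes ab: "a < (b::nat)" shows "pick {a,b} (Suc 0) = b"
proof -
  have "pick {a,b} (Suc 0) = (LEAST x. x \<in> {a,b} \<and> pick {a,b} 0 < x)" by simp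
  also have "pick {a,b} 0 = a" by (rule pick2_0[OF ab])
  also have "(LEAST x. x \<in> {a,b} \<and> a < x) = b" by (rule Least_equality) (use ab in auto)
  finally show ?thesis .
qed

lemma minor_zero_ord:
  fixes M :: "'a::field mat"
  assumes M: "M \<in> carrier_mat n n" and rk: "vec_space.rank n M \<le> 1"
    and ab: "a < b" "b < n" and ce: "c < e" "e < n"
  shows "M $$ (a,c) * M $$ (b,e) = M $$ (a,e) * M $$ (b,c)"
proof (rule ccontr)
  assume ne: "M $$ (a,c) * M $$ (b,e) \<noteq> M $$ (a,e) * M $$ (b,c)"
  have ca: "card {i. i < n \<and> i \<in> {a,b}} = 2"
  proof -
    have "{i. i < n \<and> i \<in> {a,b}} = {a,b}" using ab by auto
    thus ?thesis using ab by simp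
  qed
  have ce2: "card {i. i < n \<and> i \<in> {c,e}} = 2"
  proof -
    have "{i. i < n \<and> i \<in> {c,e}} = {c,e}" using ce by auto
    thus ?thesis using ce by simp
  qed
  have dM: "dim_row M = n" "dim_col M = n" using M by auto
  have S: "submatrix M {a,b} {c,e} \<in> carrier_mat 2 2"
  proof (rule carrier_matI)
    show "dim_row (submatrix M {a,b} {c,e}) = 2" unfolding dim_submatrix dM by (rule ca)
    show "dim_col (submatrix M {a,b} {c,e}) = 2" unfolding dim_submatrix dM by (rule ce2)
  qed
  have ent: "\<And>i j. i < 2 \<Longrightarrow> j < 2 \<Longrightarrow> submatrix M {a,b} {c,e} $$ (i,j) = M $$ (pick {a,b} i, pick {c,e} j)"
  proof -
    fix i j :: nat assume "i < 2" "j < 2"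
    thus "submatrix M {a,b} {c,e} $$ (i,j) = M $$ (pick {a,b} i, pick {c,e} j)"
      by (intro submatrix_index) (simp_all only: dM ca ce2)
  qed
  have one: "(1::nat) = Suc 0" by simp
  have e00: "submatrix M {a,b} {c,e} $$ (0,0) = M $$ (a,c)"
    using ent[of 0 0] pick2_0[OF ab(1)] pick2_0[OF ce(1)] by simp
  have e01: "submatrix M {a,b} {c,e} $$ (0,1) = M $$ (a,e)"
    using ent[of 0 1] pick2_0[OF ab(1)] pick2_1[OF ce(1)] unfolding one by simp
  have e10: "submatrix M {a,b} {c,e} $$ (1,0) = M $$ (b,c)"
    using ent[of 1 0] pick2_1[OF ab(1)] pick2_0[OF ce(1)] unfolding one by simp
  have e11: "submatrix M {a,b} {c,e} $$ (1,1) = M $$ (b,e)"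
    using ent[of 1 1] pick2_1[OF ab(1)] pick2_1[OF ce(1)] unfolding one by simp
  have "det (submatrix M {a,b} {c,e}) = M $$ (a,c) * M $$ (b,e) - M $$ (a,e) * M $$ (b,c)"
    unfolding det2[OF S] e00 e01 e10 e11 ..
  hence "det (submatrix M {a,b} {c,e}) \<noteq> 0" using ne by simp
  hence "card {j. j < n \<and> j \<in> {c,e}} \<le> vec_space.rank n M"
    by (rule vec_space.rank_gt_minor[OF M])
  thus False using ce2 rk by simp
qed

lemma minor_zero:
  fixes M :: "'a::field mat"
  assumes M: "M \<in> carrier_mat n n" and rk: "vec_space.rank n M \<le> 1"
    and ab: "a < n" "b < n" and ce: "c < n" "e < n"
  shows "M $$ (a,c) * M $$ (b,e) = M $$ (a,e) * M $$ (b,c)"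
proof -
  consider "a = b" | "c = e" | "a < b" "c < e" | "a < b" "e < c" | "b < a" "c < e" | "b < a" "e < c"
    by linarith
  thus ?thesis
  proof cases
    case 3 thus ?thesis using minor_zero_ord[OF M rk] ab ce by blast
  next
    case 4 thus ?thesis using minor_zero_ord[OF M rk, of a b e c] ab ce by (simp add: ac_simps)
  next
    case 5 thus ?thesis using minor_zero_ord[OF M rk, of b a c e] ab ce by (simp add: ac_simps)
  next
    case 6 thus ?thesis using minor_zero_ord[OF M rk, of b a e c] ab ce by (simp add: ac_simps)
  qed (auto simp: ac_simps)
qed

lemma rank1_factor:
  fixes M :: "'a::field mat"
  assumes M: "M \<in> carrier_mat n n" and rk: "vec_space.rank n M \<le> 1"
    and u: "u \<in> carrier_vec n" and al: "al = M *\<^sub>v u" and p: "p < n" and alp: "al $ p \<noteq> 0"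
  shows "\<And>i j. i < n \<Longrightarrow> j < n \<Longrightarrow> M $$ (i,j) = al $ i * (M $$ (p,j) / al $ p)"
proof -
  fix i j assume i: "i < n" and j: "j < n"
  have ali: "\<And>k. k < n \<Longrightarrow> al $ k = (\<Sum>l<n. M $$ (k,l) * u $ l)"
    using al M u by (auto simp: scalar_prod_def lessThan_atLeast0 ac_simps)
  have "M $$ (i,j) * al $ p - M $$ (p,j) * al $ i
     = (\<Sum>l<n. u $ l * (M $$ (i,j) * M $$ (p,l) - M $$ (i,l) * M $$ (p,j)))"
    unfolding ali[OF p] ali[OF i] by (simp add: sum_distrib_left sum_subtractf algebra_simps)
  also have "\<dots> = 0"
    by (rule sum.neutral) (use minor_zero[OF M rk i p j] in \<open>auto simp: ac_simps\<close>)
  finally have "M $$ (i,j) * al $ p = al $ i * M $$ (p,j)" by (simp add: ac_simps)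
  thus "M $$ (i,j) = al $ i * (M $$ (p,j) / al $ p)" using alp by (simp add: field_simps)
qed

lemma diag_mult_vec:
  fixes E :: "'a::comm_ring_1 mat"
  assumes E: "E \<in> carrier_mat n n" and dE: "diagonal_mat E" and v: "v \<in> carrier_vec n" and i: "i < n"
  shows "(E *\<^sub>v v) $ i = E $$ (i,i) * v $ i"
proof -
  have "(E *\<^sub>v v) $ i = (\<Sum>j\<in>{0..<n}. E $$ (i,j) * v $ j)" using E v i by (simp add: scalar_prod_def)
  also have "\<dots> = E $$ (i,i) * v $ i"
  proof (subst sum.remove[of _ i])
    have "(\<Sum>j\<in>{0..<n} - {i}. E $$ (i,j) * v $ j) = 0"
      by (rule sum.neutral) (use dE E i in \<open>auto simp: diagonal_mat_def\<close>)
    thus "E $$ (i, i) * v $ i + (\<Sum>j\<in>{0..<n} - {i}. E $$ (i,j) * v $ j) = E $$ (i,i) * v $ i" by simp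
  qed (use i in auto)
  finally show ?thesis .
qed

lemma refl_eig_ne1:
  fixes A :: "'a::field mat"
  assumes A: "is_reflection n A" and u: "u \<in> carrier_vec n" and al: "al = (A - 1\<^sub>m n) *\<^sub>v u"
    and al0: "al \<noteq> 0\<^sub>v n" and ev: "A *\<^sub>v al = lam \<cdot>\<^sub>v al"
  shows "lam \<noteq> 1"
proof
  assume l1: "lam = 1"
  have Ac: "A \<in> carrier_mat n n" using A unfolding is_reflection_def by simp
  obtain D where sim: "similar_mat A D" and dD: "diagonal_mat D"
    using A unfolding is_reflection_def diagonalizable_mat_def by blast
  obtain P Q where w: "similar_mat_wit A D P Q" using sim unfolding similar_mat_def by blast
  have c: "D \<in> carrier_mat n n" "P \<in> carrier_mat n n" "Q \<in> carrier_mat n n"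
    and PQ: "P * Q = 1\<^sub>m n" and QP: "Q * P = 1\<^sub>m n" and AD: "A = P * D * Q"
    using w Ac unfolding similar_mat_wit_def Let_def by auto
  let ?E = "D - 1\<^sub>m n"
  have Ec: "?E \<in> carrier_mat n n" by (rule minus_carrier_mat) simp
  have dE: "diagonal_mat ?E" using dD c unfolding diagonal_mat_def by auto
  have Nc: "A - 1\<^sub>m n \<in> carrier_mat n n" by (rule minus_carrier_mat) simp
  have alc: "al \<in> carrier_vec n" unfolding al using Nc u by (rule mult_mat_vec_carrier)
  have N: "A - 1\<^sub>m n = P * ?E * Q"
  proof -
    have "P * ?E * Q = P * (?E * Q)" by (rule assoc_mult_mat[OF c(2) Ec c(3)])
    also have "?E * Q = D * Q - 1\<^sub>m n * Q" by (rule minus_mult_distrib_mat[OF c(1) one_carrier_mat c(3)])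
    also have "1\<^sub>m n * Q = Q" using c(3) by simp
    also have "P * (D * Q - Q) = P * (D * Q) - P * Q"
      by (rule mult_minus_distrib_mat[OF c(2)]) (use c in auto)
    also have "P * (D * Q) = A" using AD assoc_mult_mat[OF c(2) c(1) c(3)] by simp
    also have "A - P * Q = A - 1\<^sub>m n" using PQ by simp
    finally show ?thesis by simp
  qed
  have Nal: "(A - 1\<^sub>m n) *\<^sub>v al = 0\<^sub>v n"
    using ev l1 Ac alc by (simp add: minus_mult_distrib_mat_vec)
  define wv where "wv = Q *\<^sub>v u"
  have wc: "wv \<in> carrier_vec n" using c u unfolding wv_def by simp
  have NE: "\<And>v. v \<in> carrier_vec n \<Longrightarrow> (A - 1\<^sub>m n) *\<^sub>v v = P *\<^sub>v (?E *\<^sub>v (Q *\<^sub>v v))"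
    unfolding N using c Ec by (simp add: assoc_mult_mat_vec[of _ n n _ n])
  have al2: "al = P *\<^sub>v (?E *\<^sub>v wv)" using NE[OF u] al unfolding wv_def by simp
  have QalE: "Q *\<^sub>v al = ?E *\<^sub>v wv"
  proof -
    have "Q *\<^sub>v al = (Q * P) *\<^sub>v (?E *\<^sub>v wv)" unfolding al2 using c Ec wc by (simp add: assoc_mult_mat_vec)
    thus ?thesis using QP Ec wc by simp
  qed
  have "P *\<^sub>v (?E *\<^sub>v (?E *\<^sub>v wv)) = 0\<^sub>v n" using NE[OF alc] Nal QalE by simp
  hence "Q *\<^sub>v (P *\<^sub>v (?E *\<^sub>v (?E *\<^sub>v wv))) = 0\<^sub>v n" using mat_vec_zero[OF c(3)] by simp
  moreover have "Q *\<^sub>v (P *\<^sub>v (?E *\<^sub>v (?E *\<^sub>v wv))) = (Q * P) *\<^sub>v (?E *\<^sub>v (?E *\<^sub>v wv))"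
    by (rule assoc_mult_mat_vec[symmetric, OF c(3) c(2)]) (use Ec wc in simp)
  ultimately have "(Q * P) *\<^sub>v (?E *\<^sub>v (?E *\<^sub>v wv)) = 0\<^sub>v n" by simp
  hence EE: "?E *\<^sub>v (?E *\<^sub>v wv) = 0\<^sub>v n" using QP Ec wc by simp
  have "?E *\<^sub>v wv = 0\<^sub>v n"
  proof (rule eq_vecI)
    fix i assume "i < dim_vec (0\<^sub>v n :: 'a vec)"
    hence i: "i < n" by simp
    have "(?E *\<^sub>v (?E *\<^sub>v wv)) $ i = ?E $$ (i,i) * (?E $$ (i,i) * wv $ i)"
      using diag_mult_vec[OF Ec dE _ i] wc Ec by simp
    hence "?E $$ (i,i) * (?E $$ (i,i) * wv $ i) = 0" using EE i by simp
    hence "?E $$ (i,i) * wv $ i = 0" by simp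
    thus "(?E *\<^sub>v wv) $ i = 0\<^sub>v n $ i" using diag_mult_vec[OF Ec dE wc i] i by simp
  qed (use Ec in simp)
  hence "al = 0\<^sub>v n" using al2 mat_vec_zero[OF c(2)] by simp
  thus False using al0 by simp
qed


lemma sub_rows_eq:
  assumes A: "A \<in> carrier_mat n n" and A': "A' \<in> carrier_mat n n"
    and I: "I \<in> dsubsets n d" and J: "J \<in> dsubsets n d"
    and e: "\<And>i j. i \<in> I \<Longrightarrow> j < n \<Longrightarrow> A $$ (i,j) = A' $$ (i,j)"
  shows "submatrix A I J = submatrix A' I J"
proof (rule eq_matI)
  fix a t assume "a < dim_row (submatrix A' I J)" "t < dim_col (submatrix A' I J)"
  hence at: "a < d" "t < d" using sub_carrier[OF A' I J] by auto
  show "submatrix A I J $$ (a,t) = submatrix A' I J $$ (a,t)"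
    using sub_index[OF A I J at] sub_index[OF A' I J at] e[OF dsub_pick[OF I at(1)] dsub_pick_less[OF J at(2)]]
    by simp
qed (use sub_carrier[OF A I J] sub_carrier[OF A' I J] in auto)

lemma dsub_pos:
  assumes I: "I \<in> dsubsets n d" and i: "i \<in> I"
  shows "card {a\<in>I. a < i} < d" "pick I (card {a\<in>I. a < i}) = i"
proof -
  have fin: "finite I" "card I = d" using I unfolding dsubsets_def by (auto intro: finite_subset)
  have "{a\<in>I. a < i} \<subset> I" using i by auto
  thus "card {a\<in>I. a < i} < d" using psubset_card_mono[OF fin(1)] fin(2) by simp
  show "pick I (card {a\<in>I. a < i}) = i" by (rule pick_card_in_set[OF i])
qed

lemma dsub_pick_inj:
  assumes I: "I \<in> dsubsets n d" and a: "a < d" and b: "b < d"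
  shows "pick I a = pick I b \<longleftrightarrow> a = b"
proof -
  have "card I = d" using I unfolding dsubsets_def by simp
  thus ?thesis using pick_inj[of I] a b unfolding inj_on_def by auto
qed

lemma det_sub_zero_col:
  fixes M :: "'a::comm_ring_1 mat"
  assumes M: "M \<in> carrier_mat n n" and I: "I \<in> dsubsets n d" and J: "J \<in> dsubsets n d"
    and j: "j \<in> J" and z: "\<And>i. i \<in> I \<Longrightarrow> M $$ (i,j) = 0"
  shows "det (submatrix M I J) = 0"
proof -
  let ?c = "card {a\<in>J. a < j}"
  have c: "?c < d" "pick J ?c = j" using dsub_pos[OF J j] by auto
  show ?thesis
  proof (rule det_zero_col[OF sub_carrier[OF M I J] c(1)])
    fix a assume a: "a < d"
    show "submatrix M I J $$ (a, ?c) = 0"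
      using sub_index[OF M I J a c(1)] c(2) z[OF dsub_pick[OF I a]] by simp
  qed
qed

lemma det_sub_id_except:
  fixes M :: "'a::comm_ring_1 mat"
  assumes M: "M \<in> carrier_mat n n" and I: "I \<in> dsubsets n d" and p: "p \<in> I"
    and e: "\<And>i j. i \<in> I \<Longrightarrow> j \<in> I \<Longrightarrow> j \<noteq> p \<Longrightarrow> M $$ (i,j) = (if i = j then 1 else 0)"
  shows "det (submatrix M I I) = M $$ (p,p)"
proof -
  let ?c = "card {a\<in>I. a < p}"
  have c: "?c < d" "pick I ?c = p" using dsub_pos[OF I p] by auto
  have "det (submatrix M I I) = submatrix M I I $$ (?c,?c)"
  proof (rule det_id_except_col[OF sub_carrier[OF M I I] c(1)])
    fix a t assume a: "a < d" and t: "t < d" and tc: "t \<noteq> ?c"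
    have "pick I t \<noteq> p" using tc c dsub_pick_inj[OF I t c(1)] by auto
    hence "M $$ (pick I a, pick I t) = (if pick I a = pick I t then 1 else 0)"
      using e[OF dsub_pick[OF I a] dsub_pick[OF I t]] by simp
    thus "submatrix M I I $$ (a,t) = (if a = t then 1 else 0)"
      using sub_index[OF M I I a t] dsub_pick_inj[OF I a t] by simp
  qed
  also have "\<dots> = M $$ (p,p)" using sub_index[OF M I I c(1) c(1)] c(2) by simp
  finally show ?thesis .
qed

lemma ext_act_sub_eq:
  assumes "\<And>J. J \<in> dsubsets n d \<Longrightarrow> submatrix A I J = submatrix A' I J"
  shows "ext_act n d A f I = ext_act n d A' f I"
  unfolding ext_act_def using assms by (auto intro!: sum.cong)


lemma mult_entry:
  assumes A: "A \<in> carrier_mat m n" and B: "B \<in> carrier_mat n q" and i: "i < m" and j: "j < q"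
  shows "(A * B) $$ (i,j) = (\<Sum>l<n. A $$ (i,l) * B $$ (l,j))"
  using A B i j by (simp add: scalar_prod_def lessThan_atLeast0)


lemma sum_delta_r: "k < (n::nat) \<Longrightarrow> (\<Sum>l<n. (if l = k then (g l :: 'a::comm_ring_1) else 0)) = g k"
  by simp

lemma ext_act_zero: "ext_act n d A (\<lambda>_. 0) = (\<lambda>_. (0::'a::field))"
  unfolding ext_act_def by auto

lemma core1:
  fixes A B :: "'a::field mat" and al be f h :: "'a vec"
  assumes A: "A \<in> carrier_mat n n" and B: "B \<in> carrier_mat n n"
    and Ae: "\<And>i j. i<n \<Longrightarrow> j<n \<Longrightarrow> A $$ (i,j) = (if i = j then 1 else 0) + al $ i * f $ j"
    and Be: "\<And>i j. i<n \<Longrightarrow> j<n \<Longrightarrow> B $$ (i,j) = (if i = j then 1 else 0) + be $ i * h $ j"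
    and p: "p < n" and alp: "al $ p \<noteq> 0"
    and x: "(\<Sum>l<n. h $ l * al $ l) = x" and x0: "x \<noteq> 0"
    and hbe: "(\<Sum>l<n. h $ l * be $ l) = mu - 1" and mu: "mu \<noteq> 1"
  shows "\<not> QP n d A B"
proof
  assume q: "QP n d A B"
  define S where "S = mat n n (\<lambda>(k,j). if k = p then h $ j / x
      else (if k = j then 1 else 0) - (if j = p then al $ k / al $ p else 0))"
  have Sc: "S \<in> carrier_mat n n" unfolding S_def by simp
  have Se: "\<And>k j. k < n \<Longrightarrow> j < n \<Longrightarrow> S $$ (k,j) = (if k = p then h $ j / x
      else (if k = j then 1 else 0) - (if j = p then al $ k / al $ p else 0))"
    unfolding S_def by simp
  have Sal: "(\<Sum>l<n. S $$ (k,l) * al $ l) = (if k = p then 1 else 0)" if k: "k < n" for k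
  proof (cases "k = p")
    case True
    have "(\<Sum>l<n. S $$ (k,l) * al $ l) = (\<Sum>l<n. h $ l * al $ l / x)"
      using True by (intro sum.cong) (auto simp: Se p)
    also have "\<dots> = (\<Sum>l<n. h $ l * al $ l) / x" by (simp add: sum_divide_distrib)
    finally show ?thesis using True x x0 by simp
  next
    case False
    have "(\<Sum>l<n. S $$ (k,l) * al $ l) = (\<Sum>l<n. (if k = l then al $ l else 0) - (if l = p then al $ k / al $ p * al $ l else 0))"
      using False by (intro sum.cong) (auto simp: Se k p)
    also have "\<dots> = al $ k - al $ k / al $ p * al $ p"
      using k p by (simp add: sum_subtractf)
    also have "\<dots> = 0" using alp by simp
    finally show ?thesis using False by simp
  qed
  have SAe: "(S * A) $$ (k,j) = S $$ (k,j) + (if k = p then f $ j else 0)" if k: "k < n" and j: "j < n" for k j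
  proof -
    have "(S * A) $$ (k,j) = (\<Sum>l<n. S $$ (k,l) * A $$ (l,j))" by (rule mult_entry[OF Sc A k j])
    also have "\<dots> = (\<Sum>l<n. (if l = j then S $$ (k,l) else 0) + S $$ (k,l) * al $ l * f $ j)"
      by (intro sum.cong) (auto simp: Ae j algebra_simps)
    also have "\<dots> = S $$ (k,j) + (\<Sum>l<n. S $$ (k,l) * al $ l) * f $ j"
      using j by (simp add: sum.distrib sum_distrib_right)
    finally show ?thesis using Sal[OF k] by simp
  qed
  define b where "b = vec n (\<lambda>k. x * (\<Sum>l<n. S $$ (k,l) * be $ l))"
  define B' where "B' = mat n n (\<lambda>(k,j). (if k = j then 1 else 0) + (if j = p then b $ k else 0))"
  have B'c: "B' \<in> carrier_mat n n" unfolding B'_def by simp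
  have B'e: "\<And>k j. k < n \<Longrightarrow> j < n \<Longrightarrow> B' $$ (k,j) = (if k = j then 1 else 0) + (if j = p then b $ k else 0)"
    unfolding B'_def by simp
  have SB: "S * B = B' * S"
  proof (rule eq_matI)
    fix k j assume "k < dim_row (B' * S)" "j < dim_col (B' * S)"
    hence k: "k < n" and j: "j < n" using B'c Sc by auto
    have "(S * B) $$ (k,j) = (\<Sum>l<n. S $$ (k,l) * B $$ (l,j))" by (rule mult_entry[OF Sc B k j])
    also have "\<dots> = (\<Sum>l<n. (if l = j then S $$ (k,l) else 0) + S $$ (k,l) * be $ l * h $ j)"
      by (intro sum.cong) (auto simp: Be j algebra_simps)
    also have "\<dots> = S $$ (k,j) + (\<Sum>l<n. S $$ (k,l) * be $ l) * h $ j"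
      using j by (simp add: sum.distrib sum_distrib_right)
    finally have e1: "(S * B) $$ (k,j) = S $$ (k,j) + (\<Sum>l<n. S $$ (k,l) * be $ l) * h $ j" .
    have "(B' * S) $$ (k,j) = (\<Sum>l<n. B' $$ (k,l) * S $$ (l,j))" by (rule mult_entry[OF B'c Sc k j])
    also have "\<dots> = (\<Sum>l<n. (if l = k then S $$ (l,j) else 0) + (if l = p then b $ k * S $$ (l,j) else 0))"
      by (intro sum.cong) (auto simp: B'e k algebra_simps)
    also have "\<dots> = S $$ (k,j) + b $ k * S $$ (p,j)"
      using k p by (simp add: sum.distrib)
    also have "\<dots> = S $$ (k,j) + (\<Sum>l<n. S $$ (k,l) * be $ l) * h $ j"
      using k j p x0 by (simp add: b_def Se)
    finally show "(S * B) $$ (k,j) = (B' * S) $$ (k,j)" using e1 by simp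
  qed (use Sc B B'c in auto)
  have bp: "b $ p = mu - 1"
  proof -
    have "b $ p = x * (\<Sum>l<n. h $ l / x * be $ l)" unfolding b_def using p by (simp add: Se)
    also have "\<dots> = (\<Sum>l<n. h $ l * be $ l)" using x0 by (simp add: sum_distrib_left)
    finally show ?thesis using hbe by simp
  qed
  have detS: "det S \<noteq> 0"
  proof
    assume "det S = 0"
    then obtain v where v: "v \<in> carrier_vec n" "v \<noteq> 0\<^sub>v n" "S *\<^sub>v v = 0\<^sub>v n"
      using det_0_iff_vec_prod_zero_field[OF Sc] by blast
    have Sv: "(\<Sum>l<n. S $$ (k,l) * v $ l) = 0" if k: "k < n" for k
    proof -
      have "(S *\<^sub>v v) $ k = 0" using v(3) k by simp
      thus ?thesis using Sc v(1) k by (simp add: scalar_prod_def lessThan_atLeast0)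
    qed
    have vk: "v $ k = al $ k / al $ p * v $ p" if k: "k < n" for k
    proof (cases "k = p")
      case True thus ?thesis using alp by simp
    next
      case False
      have "(\<Sum>l<n. S $$ (k,l) * v $ l) = (\<Sum>l<n. (if k = l then v $ l else 0) - (if l = p then al $ k / al $ p * v $ l else 0))"
        using False by (intro sum.cong) (auto simp: Se k p)
      also have "\<dots> = v $ k - al $ k / al $ p * v $ p" using k p by (simp add: sum_subtractf)
      finally show ?thesis using Sv[OF k] by simp
    qed
    have "(\<Sum>l<n. S $$ (p,l) * v $ l) = (\<Sum>l<n. h $ l * al $ l * (v $ p / al $ p) / x)"
    proof (rule sum.cong[OF refl])
      fix l assume "l \<in> {..<n}"
      hence l: "l < n" by simp
      show "S $$ (p,l) * v $ l = h $ l * al $ l * (v $ p / al $ p) / x"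
        unfolding Se[OF p l] vk[OF l] by (simp add: ac_simps)
    qed
    also have "\<dots> = (\<Sum>l<n. h $ l * al $ l) * (v $ p / al $ p) / x"
      by (simp add: sum_divide_distrib sum_distrib_right)
    finally have "(\<Sum>l<n. S $$ (p,l) * v $ l) = (\<Sum>l<n. h $ l * al $ l) * (v $ p / al $ p) / x" .
    hence "v $ p / al $ p = 0" using Sv[OF p] x x0 by simp
    hence vp: "v $ p = 0" using alp by simp
    have "v = 0\<^sub>v n" by (rule eq_vecI) (use v(1) vk vp in auto)
    thus False using v(2) by simp
  qed
  obtain P where Pc: "P \<in> carrier_mat n n" and PS: "P * S = 1\<^sub>m n"
    using det_non_zero_imp_unit[OF Sc detS, of undefined] unfolding Units_def ring_mat_simps by auto
  obtain w u where w: "w \<in> ext_space n d" and u: "u \<in> ext_space n d" and w0: "w \<noteq> (\<lambda>_. 0)"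
    and wd: "w = (\<lambda>I. ext_act n d A u I - u I)" and wB: "ext_act n d B w = w"
    using q unfolding QP_def by blast
  define z where "z = ext_act n d S w"
  have wz: "ext_act n d P z = w"
    unfolding z_def using ext_act_mult[OF Pc Sc, of d w] PS ext_act_one[OF w] by simp
  have z_out: "z I = 0" if I: "I \<in> dsubsets n d" and pI: "p \<notin> I" for I
  proof -
    have "z = (\<lambda>I. ext_act n d S (ext_act n d A u) I - ext_act n d S u I)"
      unfolding z_def wd ext_act_diff ..
    also have "ext_act n d S (ext_act n d A u) = ext_act n d (S * A) u"
      using ext_act_mult[OF Sc A] by simp
    finally have zI: "z I = ext_act n d (S * A) u I - ext_act n d S u I" by simp
    have "ext_act n d (S * A) u I = ext_act n d S u I"
    proof (rule ext_act_sub_eq)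
      fix J assume J: "J \<in> dsubsets n d"
      show "submatrix (S * A) I J = submatrix S I J"
      proof (rule sub_rows_eq[OF _ Sc I J])
        show "S * A \<in> carrier_mat n n" using Sc A by simp
        fix i j assume i: "i \<in> I" and j: "j < n"
        have "i < n" "i \<noteq> p" using i I pI unfolding dsubsets_def by auto
        thus "(S * A) $$ (i,j) = S $$ (i,j)" using SAe j by simp
      qed
    qed
    thus ?thesis using zI by simp
  qed
  have zB: "ext_act n d B' z = z"
  proof -
    have "ext_act n d B' z = ext_act n d (B' * S) w" unfolding z_def using ext_act_mult[OF B'c Sc] by simp
    also have "\<dots> = ext_act n d (S * B) w" using SB by simp
    also have "\<dots> = ext_act n d S (ext_act n d B w)" using ext_act_mult[OF Sc B] by simp
    finally show ?thesis using wB unfolding z_def by simp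
  qed
  have z_in: "z I = 0" if I: "I \<in> dsubsets n d" and pI: "p \<in> I" for I
  proof -
    have "z I = ext_act n d B' z I" using zB by simp
    also have "\<dots> = (\<Sum>J\<in>dsubsets n d. det (submatrix B' I J) * z J)" unfolding ext_act_def using I by simp
    also have "\<dots> = (\<Sum>J\<in>dsubsets n d. if J = I then mu * z I else 0)"
    proof (rule sum.cong[OF refl])
      fix J assume J: "J \<in> dsubsets n d"
      show "det (submatrix B' I J) * z J = (if J = I then mu * z I else 0)"
      proof (cases "J = I")
        case True
        have "det (submatrix B' I I) = B' $$ (p,p)"
        proof (rule det_sub_id_except[OF B'c I pI])
          fix i j assume "i \<in> I" "j \<in> I" "j \<noteq> p"
          moreover hence "i < n" "j < n" using I unfolding dsubsets_def by auto
          ultimately show "B' $$ (i,j) = (if i = j then 1 else 0)" using B'e by simp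
        qed
        also have "\<dots> = mu" using B'e[OF p p] bp by simp
        finally show ?thesis using True by simp
      next
        case False
        show ?thesis
        proof (cases "p \<in> J")
          case False thus ?thesis using z_out[OF J] \<open>J \<noteq> I\<close> by simp
        next
          case True
          have cI: "card I = d" "card J = d" "finite I" using I J unfolding dsubsets_def
            by (auto intro: finite_subset)
          have "\<not> J \<subseteq> I"
          proof
            assume "J \<subseteq> I" hence "J = I" using cI card_subset_eq by metis
            thus False using \<open>J \<noteq> I\<close> by simp
          qed
          then obtain j where j: "j \<in> J" "j \<notin> I" by auto
          have "det (submatrix B' I J) = 0"
          proof (rule det_sub_zero_col[OF B'c I J j(1)])
            fix i assume i: "i \<in> I"
            have "i < n" "j < n" "i \<noteq> j" "j \<noteq> p" using i j I J pI unfolding dsubsets_def by auto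
            thus "B' $$ (i,j) = 0" using B'e by simp
          qed
          thus ?thesis using \<open>J \<noteq> I\<close> by simp
        qed
      qed
    qed
    also have "\<dots> = mu * z I" using I finite_dsubsets by simp
    finally have "(1 - mu) * z I = 0" by (simp add: algebra_simps)
    thus ?thesis using mu by simp
  qed
  have "z = (\<lambda>_. 0)"
  proof
    fix I show "z I = 0"
    proof (cases "I \<in> dsubsets n d")
      case True thus ?thesis using z_in z_out by blast
    next
      case False thus ?thesis unfolding z_def ext_act_def by simp
    qed
  qed
  hence "w = (\<lambda>_. 0)" using wz ext_act_zero by metis
  thus False using w0 by simp
qed


lemma core0:
  fixes A B :: "'a::field mat" and al be f h :: "'a vec"
  assumes A: "A \<in> carrier_mat n n" and B: "B \<in> carrier_mat n n"
    and Ae: "\<And>i j. i<n \<Longrightarrow> j<n \<Longrightarrow> A $$ (i,j) = (if i = j then 1 else 0) + al $ i * f $ j"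
    and Be: "\<And>i j. i<n \<Longrightarrow> j<n \<Longrightarrow> B $$ (i,j) = (if i = j then 1 else 0) + be $ i * h $ j"
    and p: "p < n" and alp: "al $ p \<noteq> 0"
    and x: "(\<Sum>l<n. h $ l * al $ l) = 0"
    and r: "r < n" "r \<noteq> p" "h $ r \<noteq> 0"
    and lam: "(\<Sum>l<n. f $ l * al $ l) = lam - 1" and lam1: "lam \<noteq> 1"
    and d: "1 \<le> d" "d \<le> n - 1"
  shows "QP n d A B"
proof -
  have "d - 1 \<le> card ({0..<n} - {p,r})" using p r d by (simp add: card_Diff_subset)
  then obtain Q where Q: "Q \<subseteq> {0..<n} - {p,r}" "card Q = d - 1" "finite Q"
    by (rule obtain_subset_with_card_n)
  define I0 where "I0 = insert p Q"
  have I0: "I0 \<in> dsubsets n d"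
  proof -
    have "p \<notin> Q" using Q by auto
    hence "card I0 = d" using Q d unfolding I0_def by simp
    moreover have "I0 \<subseteq> {..<n}" using Q p unfolding I0_def by auto
    ultimately show ?thesis unfolding dsubsets_def by simp
  qed
  have rI0: "r \<notin> I0" using Q r unfolding I0_def by auto
  have pI0: "p \<in> I0" unfolding I0_def by simp
  define s0 where "s0 = card {a\<in>I0. a < p}"
  have s0: "s0 < d" "pick I0 s0 = p" using dsub_pos[OF I0 pI0] unfolding s0_def by auto
  define V where "V = mat n d (\<lambda>(i,t). if pick I0 t = p then al $ i
     else (if i = pick I0 t then 1 else 0) - (if i = r then h $ (pick I0 t) / h $ r else 0))"
  have Vc: "V \<in> carrier_mat n d" unfolding V_def by simp
  have Ve: "\<And>i t. i < n \<Longrightarrow> t < d \<Longrightarrow> V $$ (i,t) = (if pick I0 t = p then al $ i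
     else (if i = pick I0 t then 1 else 0) - (if i = r then h $ (pick I0 t) / h $ r else 0))"
    unfolding V_def by simp
  have hV: "(\<Sum>l<n. h $ l * V $$ (l,t)) = 0" if t: "t < d" for t
  proof (cases "pick I0 t = p")
    case True
    have "(\<Sum>l<n. h $ l * V $$ (l,t)) = (\<Sum>l<n. h $ l * al $ l)"
      by (intro sum.cong) (auto simp: Ve t True)
    thus ?thesis using x by simp
  next
    case False
    let ?q = "pick I0 t"
    have q: "?q < n" "?q \<noteq> r" using dsub_pick_less[OF I0 t] dsub_pick[OF I0 t] rI0 by auto
    have "(\<Sum>l<n. h $ l * V $$ (l,t)) = (\<Sum>l<n. (if l = ?q then h $ l else 0) - (if l = r then h $ r * (h $ ?q / h $ r) else 0))"
      by (intro sum.cong) (auto simp: Ve t False)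
    also have "\<dots> = h $ ?q - h $ r * (h $ ?q / h $ r)" using q r by (simp add: sum_subtractf)
    also have "\<dots> = 0" using r by simp
    finally show ?thesis .
  qed
  have BV: "B * V = V"
  proof (rule eq_matI)
    fix i t assume "i < dim_row V" "t < dim_col V"
    hence i: "i < n" and t: "t < d" using Vc by auto
    have "(B * V) $$ (i,t) = (\<Sum>l<n. B $$ (i,l) * V $$ (l,t))" by (rule mult_entry[OF B Vc i t])
    also have "\<dots> = (\<Sum>l<n. (if l = i then V $$ (l,t) else 0) + be $ i * (h $ l * V $$ (l,t)))"
      by (intro sum.cong) (auto simp: Be i algebra_simps)
    also have "\<dots> = V $$ (i,t) + be $ i * (\<Sum>l<n. h $ l * V $$ (l,t))"
      using i by (simp add: sum.distrib sum_distrib_left)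
    finally show "(B * V) $$ (i,t) = V $$ (i,t)" using hV[OF t] by simp
  qed (use B Vc in auto)
  define cf where "cf = (\<lambda>t. \<Sum>l<n. f $ l * V $$ (l,t))"
  have cf0: "cf s0 = lam - 1"
  proof -
    have "cf s0 = (\<Sum>l<n. f $ l * al $ l)" unfolding cf_def
      by (intro sum.cong) (auto simp: Ve s0)
    thus ?thesis using lam by simp
  qed
  define T where "T = mat d d (\<lambda>(a,t). (if a = t then 1 else 0) + (if a = s0 then cf t else 0))"
  have Tc: "T \<in> carrier_mat d d" unfolding T_def by simp
  have Te: "\<And>a t. a < d \<Longrightarrow> t < d \<Longrightarrow> T $$ (a,t) = (if a = t then 1 else 0) + (if a = s0 then cf t else 0)"
    unfolding T_def by simp
  have AV: "A * V = V * T"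
  proof (rule eq_matI)
    fix i t assume "i < dim_row (V * T)" "t < dim_col (V * T)"
    hence i: "i < n" and t: "t < d" using Vc Tc by auto
    have "(A * V) $$ (i,t) = (\<Sum>l<n. A $$ (i,l) * V $$ (l,t))" by (rule mult_entry[OF A Vc i t])
    also have "\<dots> = (\<Sum>l<n. (if l = i then V $$ (l,t) else 0) + al $ i * (f $ l * V $$ (l,t)))"
      by (intro sum.cong) (auto simp: Ae i algebra_simps)
    also have "\<dots> = V $$ (i,t) + al $ i * cf t"
      using i unfolding cf_def by (simp add: sum.distrib sum_distrib_left)
    finally have e1: "(A * V) $$ (i,t) = V $$ (i,t) + al $ i * cf t" .
    have "(V * T) $$ (i,t) = (\<Sum>a<d. V $$ (i,a) * T $$ (a,t))" by (rule mult_entry[OF Vc Tc i t])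
    also have "\<dots> = (\<Sum>a<d. (if a = t then V $$ (i,a) else 0) + (if a = s0 then V $$ (i,a) * cf t else 0))"
      by (intro sum.cong) (auto simp: Te t algebra_simps)
    also have "\<dots> = V $$ (i,t) + V $$ (i,s0) * cf t" using t s0 by (simp add: sum.distrib)
    also have "V $$ (i,s0) = al $ i" using Ve[OF i s0(1)] s0(2) by simp
    finally show "(A * V) $$ (i,t) = (V * T) $$ (i,t)" using e1 by simp
  qed (use A Vc Tc in auto)
  have detT: "det T = lam"
  proof -
    have "det T = T $$ (s0,s0)"
      by (rule det_id_except_row[OF Tc s0(1)]) (simp add: Te)
    thus ?thesis using Te[OF s0(1) s0(1)] cf0 by simp
  qed
  define w where "w = wdg n d V"
  have wA: "ext_act n d A w = (\<lambda>I. lam * w I)"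
  proof
    fix I
    have "ext_act n d A w = wdg n d (V * T)" unfolding w_def ext_act_wdg[OF A Vc] AV ..
    moreover have "wdg n d (V * T) I = lam * w I"
    proof (cases "I \<in> dsubsets n d")
      case True
      have "submatrix (V * T) I UNIV = submatrix V I UNIV * T"
        unfolding sub_mult[OF Vc Tc, of I UNIV] submatrix_UNIV_UNIV[of T] ..
      hence "det (submatrix (V * T) I UNIV) = det (submatrix V I UNIV) * det T"
        using det_mult[OF subU_carrier2[OF Vc True] Tc] by simp
      thus ?thesis unfolding wdg_def w_def using True detT by (simp add: ac_simps)
    next
      case False thus ?thesis unfolding wdg_def w_def by simp
    qed
    ultimately show "ext_act n d A w I = lam * w I" by simp
  qed
  have wB: "ext_act n d B w = w" unfolding w_def ext_act_wdg[OF B Vc] BV ..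
  have w0: "w I0 \<noteq> 0"
  proof -
    have VI: "submatrix V I0 UNIV \<in> carrier_mat d d" by (rule subU_carrier2[OF Vc I0])
    have "det (submatrix V I0 UNIV) = submatrix V I0 UNIV $$ (s0,s0)"
    proof (rule det_id_except_col[OF VI s0(1)])
      fix a t assume a: "a < d" and t: "t < d" and ts: "t \<noteq> s0"
      have pt: "pick I0 t \<noteq> p" using ts s0 dsub_pick_inj[OF I0 t s0(1)] by auto
      have pa: "pick I0 a \<noteq> r" using dsub_pick[OF I0 a] rI0 by auto
      show "submatrix V I0 UNIV $$ (a,t) = (if a = t then 1 else 0)"
        using subU_index2[OF Vc I0 a t] Ve[OF dsub_pick_less[OF I0 a] t] pt pa dsub_pick_inj[OF I0 a t]
        by simp
    qed
    also have "\<dots> = al $ p" using subU_index2[OF Vc I0 s0(1) s0(1)] Ve[OF p s0(1)] s0 by simp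
    finally show ?thesis unfolding w_def wdg_def using I0 alp by simp
  qed
  define c where "c = inverse (lam - 1)"
  define u where "u = (\<lambda>I. c * w I)"
  have wsp: "w \<in> ext_space n d" unfolding w_def by (rule wdg_space)
  have usp: "u \<in> ext_space n d" unfolding u_def by (rule ext_space_smult[OF wsp])
  have "(\<lambda>I. ext_act n d A u I - u I) = w"
  proof
    fix I
    have "ext_act n d A u I = c * (lam * w I)" unfolding u_def ext_act_smult wA by simp
    hence "ext_act n d A u I - u I = c * (lam - 1) * w I" unfolding u_def by (simp add: algebra_simps)
    thus "ext_act n d A u I - u I = w I" unfolding c_def using lam1 by simp
  qed
  moreover have "w \<noteq> (\<lambda>_. 0)" using w0 by auto
  ultimately show ?thesis unfolding QP_def using wsp usp wB by metis
qed


lemma refl_factor: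
  fixes A :: "'a::field mat"
  assumes A: "is_reflection n A" and rv: "reflection_vector n A al"
  shows "A \<in> carrier_mat n n" "al \<in> carrier_vec n" "\<exists>p<n. al $ p \<noteq> 0"
    "\<exists>f. \<forall>i<n. \<forall>j<n. A $$ (i,j) = (if i = j then 1 else 0) + al $ i * f $ j"
    "\<exists>u. u \<in> carrier_vec n \<and> al = (A - 1\<^sub>m n) *\<^sub>v u \<and> al \<noteq> 0\<^sub>v n"
proof -
  show Ac: "A \<in> carrier_mat n n" using A unfolding is_reflection_def by simp
  obtain u where u: "u \<in> carrier_vec n" and al: "al = (A - 1\<^sub>m n) *\<^sub>v u" and al0: "al \<noteq> 0\<^sub>v n"
    using rv unfolding reflection_vector_def by blast
  show "\<exists>u. u \<in> carrier_vec n \<and> al = (A - 1\<^sub>m n) *\<^sub>v u \<and> al \<noteq> 0\<^sub>v n" using u al al0 by blast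
  have Nc: "A - 1\<^sub>m n \<in> carrier_mat n n" by (rule minus_carrier_mat) simp
  show alc: "al \<in> carrier_vec n" unfolding al using Nc u by (rule mult_mat_vec_carrier)
  show "\<exists>p<n. al $ p \<noteq> 0"
  proof (rule ccontr)
    assume "\<not> (\<exists>p<n. al $ p \<noteq> 0)"
    hence "al = 0\<^sub>v n" using alc by (intro eq_vecI) auto
    thus False using al0 by simp
  qed
  then obtain p where p: "p < n" "al $ p \<noteq> 0" by blast
  have rk: "vec_space.rank n (A - 1\<^sub>m n) \<le> 1" using A unfolding is_reflection_def by simp
  have fac: "\<And>i j. i < n \<Longrightarrow> j < n \<Longrightarrow> (A - 1\<^sub>m n) $$ (i,j) = al $ i * ((A - 1\<^sub>m n) $$ (p,j) / al $ p)"
    by (rule rank1_factor[OF Nc rk u al p])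
  define f where "f = vec n (\<lambda>j. (A - 1\<^sub>m n) $$ (p,j) / al $ p)"
  have "\<forall>i<n. \<forall>j<n. A $$ (i,j) = (if i = j then 1 else 0) + al $ i * f $ j"
  proof (intro allI impI)
    fix i j assume i: "i < n" and j: "j < n"
    have "(A - 1\<^sub>m n) $$ (i,j) = A $$ (i,j) - (if i = j then 1 else 0)" using Ac i j by simp
    thus "A $$ (i,j) = (if i = j then 1 else 0) + al $ i * f $ j"
      using fac[OF i j] j unfolding f_def by simp
  qed
  thus "\<exists>f. \<forall>i<n. \<forall>j<n. A $$ (i,j) = (if i = j then 1 else 0) + al $ i * f $ j" by blast
qed

lemma mat_vec_entry:
  assumes A: "A \<in> carrier_mat n n" and v: "v \<in> carrier_vec n" and i: "i < n"
  shows "(A *\<^sub>v v) $ i = (\<Sum>l<n. A $$ (i,l) * v $ l)"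
  using A v i by (simp add: scalar_prod_def lessThan_atLeast0)

lemma rank1_apply:
  fixes A :: "'a::field mat"
  assumes A: "A \<in> carrier_mat n n" and v: "v \<in> carrier_vec n" and i: "i < n"
    and Ae: "\<forall>i<n. \<forall>j<n. A $$ (i,j) = (if i = j then 1 else 0) + al $ i * f $ j"
  shows "(A *\<^sub>v v) $ i = v $ i + al $ i * (\<Sum>l<n. f $ l * v $ l)"
proof -
  have "(A *\<^sub>v v) $ i = (\<Sum>l<n. (if l = i then v $ l else 0) + al $ i * (f $ l * v $ l))"
    unfolding mat_vec_entry[OF A v i]
  proof (rule sum.cong[OF refl])
    fix l assume "l \<in> {..<n}"
    hence l: "l < n" by simp
    show "A $$ (i,l) * v $ l = (if l = i then v $ l else 0) + al $ i * (f $ l * v $ l)"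
      using Ae i l by (cases "l = i") (simp_all add: algebra_simps)
  qed
  also have "\<dots> = v $ i + al $ i * (\<Sum>l<n. f $ l * v $ l)" using i by (simp add: sum.distrib sum_distrib_left)
  finally show ?thesis .
qed

lemma rep_char:
  fixes A B :: "'a::field mat"
  assumes A: "is_reflection n A" and B: "is_reflection n B"
    and ra: "reflection_vector n A al" and ea: "A *\<^sub>v al = lam \<cdot>\<^sub>v al"
    and rb: "reflection_vector n B be" and eb: "B *\<^sub>v be = mu \<cdot>\<^sub>v be"
    and bal: "B *\<^sub>v al = al + x \<cdot>\<^sub>v be"
    and d: "1 \<le> d" "d \<le> n - 1"
  shows "QP n d A B \<longleftrightarrow> x = 0"
proof -
  note fa = refl_factor[OF A ra] and fb = refl_factor[OF B rb]
  have Ac: "A \<in> carrier_mat n n" and alc: "al \<in> carrier_vec n" using fa by auto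
  have Bc: "B \<in> carrier_mat n n" and bec: "be \<in> carrier_vec n" using fb by auto
  obtain p where p: "p < n" "al $ p \<noteq> 0" using fa(3) by blast
  obtain pb where pb: "pb < n" "be $ pb \<noteq> 0" using fb(3) by blast
  obtain f where Ae: "\<forall>i<n. \<forall>j<n. A $$ (i,j) = (if i = j then 1 else 0) + al $ i * f $ j" using fa(4) by blast
  obtain h where Be: "\<forall>i<n. \<forall>j<n. B $$ (i,j) = (if i = j then 1 else 0) + be $ i * h $ j" using fb(4) by blast
  obtain ua where ua: "ua \<in> carrier_vec n" "al = (A - 1\<^sub>m n) *\<^sub>v ua" "al \<noteq> 0\<^sub>v n" using fa(5) by blast
  obtain ub where ub: "ub \<in> carrier_vec n" "be = (B - 1\<^sub>m n) *\<^sub>v ub" "be \<noteq> 0\<^sub>v n" using fb(5) by blast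
  have lam1: "lam \<noteq> 1" by (rule refl_eig_ne1[OF A ua(1) ua(2) ua(3) ea])
  have mu1: "mu \<noteq> 1" by (rule refl_eig_ne1[OF B ub(1) ub(2) ub(3) eb])
  have lam: "(\<Sum>l<n. f $ l * al $ l) = lam - 1"
  proof -
    have "(A *\<^sub>v al) $ p = al $ p + al $ p * (\<Sum>l<n. f $ l * al $ l)" by (rule rank1_apply[OF Ac alc p(1) Ae])
    moreover have "(A *\<^sub>v al) $ p = lam * al $ p" using ea p(1) alc by simp
    ultimately have "al $ p * ((\<Sum>l<n. f $ l * al $ l) - (lam - 1)) = 0" by (simp add: algebra_simps)
    thus ?thesis using p(2) by simp
  qed
  have hbe: "(\<Sum>l<n. h $ l * be $ l) = mu - 1"
  proof -
    have "(B *\<^sub>v be) $ pb = be $ pb + be $ pb * (\<Sum>l<n. h $ l * be $ l)" by (rule rank1_apply[OF Bc bec pb(1) Be])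
    moreover have "(B *\<^sub>v be) $ pb = mu * be $ pb" using eb pb(1) bec by simp
    ultimately have "be $ pb * ((\<Sum>l<n. h $ l * be $ l) - (mu - 1)) = 0" by (simp add: algebra_simps)
    thus ?thesis using pb(2) by simp
  qed
  have hal: "(\<Sum>l<n. h $ l * al $ l) = x"
  proof -
    have F1: "(B *\<^sub>v al) $ pb = al $ pb + be $ pb * (\<Sum>l<n. h $ l * al $ l)" by (rule rank1_apply[OF Bc alc pb(1) Be])
    have F2: "(B *\<^sub>v al) $ pb = al $ pb + x * be $ pb" using bal pb(1) alc bec by simp
    from F1 F2 have "be $ pb * (\<Sum>l<n. h $ l * al $ l) = be $ pb * x" by (metis add_left_cancel mult.commute)
    thus ?thesis using pb(2) by (metis mult_left_cancel)
  qed
  have Ae': "\<And>i j. i<n \<Longrightarrow> j<n \<Longrightarrow> A $$ (i,j) = (if i = j then 1 else 0) + al $ i * f $ j" using Ae by blast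
  have Be': "\<And>i j. i<n \<Longrightarrow> j<n \<Longrightarrow> B $$ (i,j) = (if i = j then 1 else 0) + be $ i * h $ j" using Be by blast
  show ?thesis
  proof (cases "x = 0")
    case True
    have "\<exists>r<n. r \<noteq> p \<and> h $ r \<noteq> 0"
    proof (rule ccontr)
      assume nr: "\<not> ?thesis"
      have "(\<Sum>l<n. h $ l * al $ l) = (\<Sum>l<n. if l = p then h $ p * al $ p else 0)"
        by (rule sum.cong[OF refl]) (use nr in auto)
      hence "h $ p * al $ p = 0" using hal True p(1) by simp
      hence hp: "h $ p = 0" using p(2) by simp
      have "(\<Sum>l<n. h $ l * be $ l) = 0"
        by (rule sum.neutral) (use nr hp in auto)
      thus False using hbe mu1 by simp
    qed
    then obtain r where r: "r < n" "r \<noteq> p" "h $ r \<noteq> 0" by blast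
    have "QP n d A B"
    proof (rule core0[OF Ac Bc Ae' Be' p _ r lam lam1 d])
      show "(\<Sum>l<n. h $ l * al $ l) = 0" using hal \<open>x = 0\<close> by simp
    qed
    thus ?thesis using True by simp
  next
    case False
    have "\<not> QP n d A B" by (rule core1[OF Ac Bc Ae' Be' p hal False hbe mu1])
    thus ?thesis using False by simp
  qed
qed

lemma ext_iso_QP:
  fixes \<rho>1 \<rho>2 :: "'g \<Rightarrow> 'a::field mat"
  assumes iso: "ext_iso W n d \<rho>1 \<rho>2 \<psi>" and a: "a \<in> carrier W" and b: "b \<in> carrier W"
  shows "QP n d (\<rho>1 a) (\<rho>1 b) \<longleftrightarrow> QP n d (\<rho>2 a) (\<rho>2 b)"
proof -
  let ?E = "ext_space n d :: (nat set \<Rightarrow> 'a) set"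
  have bij: "bij_betw \<psi> ?E ?E"
    and add: "\<And>f h. f \<in> ?E \<Longrightarrow> h \<in> ?E \<Longrightarrow> \<psi> (\<lambda>I. f I + h I) = (\<lambda>I. \<psi> f I + \<psi> h I)"
    and sm: "\<And>c f. f \<in> ?E \<Longrightarrow> \<psi> (\<lambda>I. c * f I) = (\<lambda>I. c * \<psi> f I)"
    and it: "\<And>g f. g \<in> carrier W \<Longrightarrow> f \<in> ?E \<Longrightarrow> \<psi> (ext_act n d (\<rho>1 g) f) = ext_act n d (\<rho>2 g) (\<psi> f)"
    using iso unfolding ext_iso_def by auto
  have inj: "inj_on \<psi> ?E" and img: "\<psi> ` ?E = ?E" using bij unfolding bij_betw_def by auto
  have cl: "\<And>f. f \<in> ?E \<Longrightarrow> \<psi> f \<in> ?E" using img by blast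
  let ?\<phi> = "inv_into ?E \<psi>"
  have pcl: "\<And>f. f \<in> ?E \<Longrightarrow> ?\<phi> f \<in> ?E" using img by (metis inv_into_into)
  have pp: "\<And>f. f \<in> ?E \<Longrightarrow> \<psi> (?\<phi> f) = f" using img by (metis f_inv_into_f)
  have pinj: "inj_on ?\<phi> ?E" using inj_on_inv_into img by (metis subset_refl)
  have ext: "\<And>f1 f2. f1 \<in> ?E \<Longrightarrow> f2 \<in> ?E \<Longrightarrow> \<psi> f1 = \<psi> f2 \<Longrightarrow> f1 = f2" using inj unfolding inj_on_def by blast
  have padd: "?\<phi> (\<lambda>I. f I + h I) = (\<lambda>I. ?\<phi> f I + ?\<phi> h I)" if f: "f \<in> ?E" and h: "h \<in> ?E" for f h
  proof (rule ext[symmetric])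
    show "(\<lambda>I. ?\<phi> f I + ?\<phi> h I) \<in> ?E" by (rule ext_space_add[OF pcl[OF f] pcl[OF h]])
    show "?\<phi> (\<lambda>I. f I + h I) \<in> ?E" by (rule pcl[OF ext_space_add[OF f h]])
    show "\<psi> (\<lambda>I. ?\<phi> f I + ?\<phi> h I) = \<psi> (?\<phi> (\<lambda>I. f I + h I))"
      using add[OF pcl[OF f] pcl[OF h]] pp[OF f] pp[OF h] pp[OF ext_space_add[OF f h]] by simp
  qed
  have psm: "?\<phi> (\<lambda>I. c * f I) = (\<lambda>I. c * ?\<phi> f I)" if f: "f \<in> ?E" for c f
  proof (rule ext[symmetric])
    show "(\<lambda>I. c * ?\<phi> f I) \<in> ?E" by (rule ext_space_smult[OF pcl[OF f]])
    show "?\<phi> (\<lambda>I. c * f I) \<in> ?E" by (rule pcl[OF ext_space_smult[OF f]])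
    show "\<psi> (\<lambda>I. c * ?\<phi> f I) = \<psi> (?\<phi> (\<lambda>I. c * f I))"
      using sm[OF pcl[OF f]] pp[OF f] pp[OF ext_space_smult[OF f]] by simp
  qed
  have pit: "?\<phi> (ext_act n d (\<rho>2 g) f) = ext_act n d (\<rho>1 g) (?\<phi> f)" if g: "g \<in> carrier W" and f: "f \<in> ?E" for g f
  proof (rule ext)
    show "?\<phi> (ext_act n d (\<rho>2 g) f) \<in> ?E" by (rule pcl[OF ext_act_space])
    show "ext_act n d (\<rho>1 g) (?\<phi> f) \<in> ?E" by (rule ext_act_space)
    show "\<psi> (?\<phi> (ext_act n d (\<rho>2 g) f)) = \<psi> (ext_act n d (\<rho>1 g) (?\<phi> f))"
      using it[OF g pcl[OF f]] pp[OF f] pp[OF ext_act_space] by simp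
  qed
  have cl0: "\<forall>f\<in>?E. \<psi> f \<in> ?E" using cl by blast
  have add0: "\<forall>f\<in>?E. \<forall>g\<in>?E. \<psi> (\<lambda>I. f I + g I) = (\<lambda>I. \<psi> f I + \<psi> g I)" using add by blast
  have sm0: "\<forall>c. \<forall>f\<in>?E. \<psi> (\<lambda>I. c * f I) = (\<lambda>I. c * \<psi> f I)" using sm by blast
  have ia0: "\<forall>f\<in>?E. \<psi> (ext_act n d (\<rho>1 a) f) = ext_act n d (\<rho>2 a) (\<psi> f)" using it[OF a] by blast
  have ib0: "\<forall>f\<in>?E. \<psi> (ext_act n d (\<rho>1 b) f) = ext_act n d (\<rho>2 b) (\<psi> f)" using it[OF b] by blast
  have pcl0: "\<forall>f\<in>?E. ?\<phi> f \<in> ?E" using pcl by blast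
  have padd0: "\<forall>f\<in>?E. \<forall>g\<in>?E. ?\<phi> (\<lambda>I. f I + g I) = (\<lambda>I. ?\<phi> f I + ?\<phi> g I)" using padd by blast
  have psm0: "\<forall>c. \<forall>f\<in>?E. ?\<phi> (\<lambda>I. c * f I) = (\<lambda>I. c * ?\<phi> f I)" using psm by blast
  have pia0: "\<forall>f\<in>?E. ?\<phi> (ext_act n d (\<rho>2 a) f) = ext_act n d (\<rho>1 a) (?\<phi> f)" using pit[OF a] by blast
  have pib0: "\<forall>f\<in>?E. ?\<phi> (ext_act n d (\<rho>2 b) f) = ext_act n d (\<rho>1 b) (?\<phi> f)" using pit[OF b] by blast
  show ?thesis
  proof
    assume "QP n d (\<rho>1 a) (\<rho>1 b)"
    thus "QP n d (\<rho>2 a) (\<rho>2 b)"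
      by (rule QP_transport[OF cl0 add0 sm0 inj ia0 ib0])
  next
    assume "QP n d (\<rho>2 a) (\<rho>2 b)"
    thus "QP n d (\<rho>1 a) (\<rho>1 b)"
      by (rule QP_transport[OF pcl0 padd0 psm0 pinj pia0 pib0])
  qed
qed


theorem corollary5p10:
  fixes W :: "('g, 'b) monoid_scheme"
    and s :: "nat \<Rightarrow> 'g" and k n d :: nat
    and \<rho>1 \<rho>2 :: "'g \<Rightarrow> 'a::field_char_0 mat"
    and \<alpha> \<beta> :: "nat \<Rightarrow> 'a vec" and lam mu :: "nat \<Rightarrow> 'a"
    and x y :: "nat \<Rightarrow> nat \<Rightarrow> 'a"
    and \<psi> :: "(nat set \<Rightarrow> 'a) \<Rightarrow> (nat set \<Rightarrow> 'a)"
  assumes "group W"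
    and "s ` {..<k} \<subseteq> carrier W"
    and "generate W (s ` {..<k}) = carrier W"
    and "irreducible_rep W n \<rho>1" and "reflection_rep W k s n \<rho>1"
    and "irreducible_rep W n \<rho>2" and "reflection_rep W k s n \<rho>2"
    and "\<And>i. i < k \<Longrightarrow> reflection_vector n (\<rho>1 (s i)) (\<alpha> i)
                \<and> \<rho>1 (s i) *\<^sub>v \<alpha> i = lam i \<cdot>\<^sub>v \<alpha> i"
    and "\<And>i. i < k \<Longrightarrow> reflection_vector n (\<rho>2 (s i)) (\<beta> i)
                \<and> \<rho>2 (s i) *\<^sub>v \<beta> i = mu i \<cdot>\<^sub>v \<beta> i"
    and "1 \<le> d" and "d \<le> n - 1"
    and "ext_iso W n d \<rho>1 \<rho>2 \<psi>"
    and "\<And>a b. a < k \<Longrightarrow> b < k \<Longrightarrow> a \<noteq> b \<Longrightarrow>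
           \<rho>1 (s b) *\<^sub>v \<alpha> a = \<alpha> a + x a b \<cdot>\<^sub>v \<alpha> b"
    and "\<And>a b. a < k \<Longrightarrow> b < k \<Longrightarrow> a \<noteq> b \<Longrightarrow>
           \<rho>2 (s b) *\<^sub>v \<beta> a = \<beta> a + y a b \<cdot>\<^sub>v \<beta> b"
    and "i < k" and "j < k" and "i \<noteq> j"
  shows "x i j = 0 \<longleftrightarrow> y i j = 0"
proof -
  have si: "s i \<in> carrier W" and sj: "s j \<in> carrier W" using assms(2) assms(15,16) by auto
  have r1i: "is_reflection n (\<rho>1 (s i))" and r1j: "is_reflection n (\<rho>1 (s j))"
    using assms(5) assms(15,16) unfolding reflection_rep_def by auto
  have r2i: "is_reflection n (\<rho>2 (s i))" and r2j: "is_reflection n (\<rho>2 (s j))"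
    using assms(7) assms(15,16) unfolding reflection_rep_def by auto
  have ai: "reflection_vector n (\<rho>1 (s i)) (\<alpha> i)" "\<rho>1 (s i) *\<^sub>v \<alpha> i = lam i \<cdot>\<^sub>v \<alpha> i"
    using assms(8)[OF assms(15)] by auto
  have aj: "reflection_vector n (\<rho>1 (s j)) (\<alpha> j)" "\<rho>1 (s j) *\<^sub>v \<alpha> j = lam j \<cdot>\<^sub>v \<alpha> j"
    using assms(8)[OF assms(16)] by auto
  have bi: "reflection_vector n (\<rho>2 (s i)) (\<beta> i)" "\<rho>2 (s i) *\<^sub>v \<beta> i = mu i \<cdot>\<^sub>v \<beta> i"
    using assms(9)[OF assms(15)] by auto
  have bj: "reflection_vector n (\<rho>2 (s j)) (\<beta> j)" "\<rho>2 (s j) *\<^sub>v \<beta> j = mu j \<cdot>\<^sub>v \<beta> j"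
    using assms(9)[OF assms(16)] by auto
  have xa: "\<rho>1 (s j) *\<^sub>v \<alpha> i = \<alpha> i + x i j \<cdot>\<^sub>v \<alpha> j" by (rule assms(13)[OF assms(15,16,17)])
  have yb: "\<rho>2 (s j) *\<^sub>v \<beta> i = \<beta> i + y i j \<cdot>\<^sub>v \<beta> j" by (rule assms(14)[OF assms(15,16,17)])
  have c1: "QP n d (\<rho>1 (s i)) (\<rho>1 (s j)) \<longleftrightarrow> x i j = 0"
    by (rule rep_char[OF r1i r1j ai(1) ai(2) aj(1) aj(2) xa assms(10) assms(11)])
  have c2: "QP n d (\<rho>2 (s i)) (\<rho>2 (s j)) \<longleftrightarrow> y i j = 0"
    by (rule rep_char[OF r2i r2j bi(1) bi(2) bj(1) bj(2) yb assms(10) assms(11)])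
  have "QP n d (\<rho>1 (s i)) (\<rho>1 (s j)) \<longleftrightarrow> QP n d (\<rho>2 (s i)) (\<rho>2 (s j))"
    by (rule ext_iso_QP[OF assms(12) si sj])
  thus ?thesis using c1 c2 by simp
qed

end
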